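(* Let $\mathfrak{F}$ be a hereditary formation of finite groups containing all finite nilpotent groups. If a finite group $G$ is the product of subgroups $G_1,\dots,G_n$ with $\mathfrak{F}$-hypercentral condition for commutators, then $$G/Z_{\mathfrak{F}}(G)\simeq G_1/Z_{\mathfrak{F}}(G_1)\times\cdots\times G_n/Z_{\mathfrak{F}}(G_n).$$
   Context: All groups are finite. A formation is a class of groups closed under homomorphic images and subdirect products (if $G/N_1,G/N_2\in\mathfrak{F}$ then $G/(N_1\cap N_2)\in\mathfrak{F}$); it is hereditary if closed under subgroups. A chief factor $H/K$ of $G$ is $\mathfrak{F}$-central in $G$ if the semidirect product $(H/K)\rtimes(G/C_G(H/K))$ (with the conjugation action) belongs to $\mathfrak{F}$. The $\mathfrak{F}$-hypercenter $Z_{\mathfrak{F}}(G)$ is the largest normal subgroup of $G$ such that every chief factor of $G$ below it is $\mathfrak{F}$-central. $G$ is the product of subgroups $G_1,\dots,G_n$ with $\mathfrak{F}$-hypercentral condition for commutators if $G=G_1\cdots G_n$, $G_iG_j$ is a subgroup of $G$ for all $i,j$, and $[G_i,\prod_{j\ne i}G_j]\le Z_{\mathfrak{F}}(G)$ for every $i\in\{1,\dots,n\}$. *)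

theory Defs
  imports "HOL-Algebra.Algebra"
begin

definition comm_subgroup :: "('a,'b) monoid_scheme \<Rightarrow> 'a set \<Rightarrow> 'a set \<Rightarrow> 'a set" where
  "comm_subgroup G A B =
     generate G {a \<otimes>\<^bsub>G\<^esub> b \<otimes>\<^bsub>G\<^esub> inv\<^bsub>G\<^esub> a \<otimes>\<^bsub>G\<^esub> inv\<^bsub>G\<^esub> b | a b. a \<in> A \<and> b \<in> B}"

primrec lower_central :: "('a,'b) monoid_scheme \<Rightarrow> nat \<Rightarrow> 'a set" where
  "lower_central G 0 = carrier G"
| "lower_central G (Suc k) = comm_subgroup G (lower_central G k) (carrier G)"

definition nilpotent_group :: "('a,'b) monoid_scheme \<Rightarrow> bool" where
  "nilpotent_group G \<longleftrightarrow> group G \<and> (\<exists>k. lower_central G k = {\<one>\<^bsub>G\<^esub>})"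

(* A class of finite groups is represented by a predicate F on groups with carrier
   in nat (every finite group is isomorphic to one of these); a group of arbitrary
   type belongs to the class iff it is isomorphic to a finite group satisfying F. *)
definition in_class :: "(nat monoid \<Rightarrow> bool) \<Rightarrow> ('a,'b) monoid_scheme \<Rightarrow> bool" where
  "in_class F S \<longleftrightarrow> (\<exists>H :: nat monoid. group H \<and> finite (carrier H) \<and> F H \<and> is_iso S H)"

definition formation :: "(nat monoid \<Rightarrow> bool) \<Rightarrow> bool" where
  "formation F \<longleftrightarrow>
     (\<forall>G :: nat monoid. \<forall>N. group G \<and> finite (carrier G) \<and> in_class F G \<and> N \<lhd> G
          \<longrightarrow> in_class F (G Mod N)) \<and>
     (\<forall>G :: nat monoid. \<forall>N1 N2. group G \<and> finite (carrier G) \<and> N1 \<lhd> G \<and> N2 \<lhd> G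
          \<and> in_class F (G Mod N1) \<and> in_class F (G Mod N2)
          \<longrightarrow> in_class F (G Mod (N1 \<inter> N2)))"

definition hereditary_formation :: "(nat monoid \<Rightarrow> bool) \<Rightarrow> bool" where
  "hereditary_formation F \<longleftrightarrow> formation F \<and>
     (\<forall>G :: nat monoid. \<forall>H. group G \<and> finite (carrier G) \<and> in_class F G \<and> subgroup H G
          \<longrightarrow> in_class F (G\<lparr>carrier := H\<rparr>))"

definition contains_nilpotent :: "(nat monoid \<Rightarrow> bool) \<Rightarrow> bool" where
  "contains_nilpotent F \<longleftrightarrow>
     (\<forall>G :: nat monoid. group G \<and> finite (carrier G) \<and> nilpotent_group G \<longrightarrow> in_class F G)"

definition chief_factor :: "('a,'b) monoid_scheme \<Rightarrow> 'a set \<Rightarrow> 'a set \<Rightarrow> bool" where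
  "chief_factor G H K \<longleftrightarrow> H \<lhd> G \<and> K \<lhd> G \<and> K \<subset> H \<and>
     (\<forall>N. N \<lhd> G \<and> K \<subseteq> N \<and> N \<subseteq> H \<longrightarrow> N = K \<or> N = H)"

definition centralizer_factor :: "('a,'b) monoid_scheme \<Rightarrow> 'a set \<Rightarrow> 'a set \<Rightarrow> 'a set" where
  "centralizer_factor G H K =
     {g \<in> carrier G. \<forall>h\<in>H. g \<otimes>\<^bsub>G\<^esub> h \<otimes>\<^bsub>G\<^esub> inv\<^bsub>G\<^esub> g \<otimes>\<^bsub>G\<^esub> inv\<^bsub>G\<^esub> h \<in> K}"

(* The semidirect product (H/K) \<rtimes> (G/C_G(H/K)), the action being conjugation:
   elements are pairs (hK, gC); the coset gC acts on hK by conjugation, and the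
   conjugate of the coset B by the coset X is the set {x b x^-1 | x in X, b in B}
   (which equals g h g^-1 K). *)
definition semidirect_factor :: "('a,'b) monoid_scheme \<Rightarrow> 'a set \<Rightarrow> 'a set \<Rightarrow> ('a set \<times> 'a set) monoid" where
  "semidirect_factor G H K =
    (let C = centralizer_factor G H K in
     \<lparr> carrier = (rcosets\<^bsub>G\<lparr>carrier := H\<rparr>\<^esub> K) \<times> (rcosets\<^bsub>G\<^esub> C),
       monoid.mult = (\<lambda>(A, S) (B, T).
                 (A <#>\<^bsub>G\<^esub> {x \<otimes>\<^bsub>G\<^esub> b \<otimes>\<^bsub>G\<^esub> inv\<^bsub>G\<^esub> x | x b. x \<in> S \<and> b \<in> B},
                  S <#>\<^bsub>G\<^esub> T)),
       one = (K, C) \<rparr>)"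

definition F_central :: "(nat monoid \<Rightarrow> bool) \<Rightarrow> ('a,'b) monoid_scheme \<Rightarrow> 'a set \<Rightarrow> 'a set \<Rightarrow> bool" where
  "F_central F G H K \<longleftrightarrow> in_class F (semidirect_factor G H K)"

definition F_hypercentral :: "(nat monoid \<Rightarrow> bool) \<Rightarrow> ('a,'b) monoid_scheme \<Rightarrow> 'a set \<Rightarrow> bool" where
  "F_hypercentral F G N \<longleftrightarrow> N \<lhd> G \<and>
     (\<forall>H K. chief_factor G H K \<and> H \<subseteq> N \<longrightarrow> F_central F G H K)"

definition F_hypercenter :: "(nat monoid \<Rightarrow> bool) \<Rightarrow> ('a,'b) monoid_scheme \<Rightarrow> 'a set" where
  "F_hypercenter F G = (GREATEST N. F_hypercentral F G N)"

definition set_prod_list :: "('a,'b) monoid_scheme \<Rightarrow> 'a set list \<Rightarrow> 'a set" where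
  "set_prod_list G As = foldr (\<lambda>A P. A <#>\<^bsub>G\<^esub> P) As {\<one>\<^bsub>G\<^esub>}"

end

theory Submission
  imports Defs
begin


definition nrm :: "('a,'b) monoid_scheme \<Rightarrow> 'a set \<Rightarrow> 'a set \<Rightarrow> bool" where
 "nrm G H N \<longleftrightarrow> subgroup N G \<and> N \<subseteq> H \<and> (\<forall>h\<in>H. \<forall>x\<in>N. h \<otimes>\<^bsub>G\<^esub> x \<otimes>\<^bsub>G\<^esub> inv\<^bsub>G\<^esub> h \<in> N)"

lemma set_mult_mem: "x \<in> A <#>\<^bsub>G\<^esub> B \<longleftrightarrow> (\<exists>a\<in>A. \<exists>b\<in>B. x = a \<otimes>\<^bsub>G\<^esub> b)"
  unfolding set_mult_def by auto

lemma r_coset_mem: "x \<in> A #>\<^bsub>G\<^esub> g \<longleftrightarrow> (\<exists>a\<in>A. x = a \<otimes>\<^bsub>G\<^esub> g)"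
  unfolding r_coset_def by auto

context group begin

lemma inv_cancel1 [simp]: "x \<in> carrier G \<Longrightarrow> y \<in> carrier G \<Longrightarrow> inv x \<otimes> (x \<otimes> y) = y"
  by (simp add: m_assoc[symmetric])
lemma inv_cancel2 [simp]: "x \<in> carrier G \<Longrightarrow> y \<in> carrier G \<Longrightarrow> x \<otimes> (inv x \<otimes> y) = y"
  by (simp add: m_assoc[symmetric])

lemma nrm_iff: assumes "subgroup H G" shows "N \<lhd> G\<lparr>carrier:=H\<rparr> \<longleftrightarrow> nrm G H N"
proof -
  interpret K: group "G\<lparr>carrier:=H\<rparr>" using subgroup_imp_group[OF assms] .
  have s: "subgroup N (G\<lparr>carrier:=H\<rparr>) \<longleftrightarrow> subgroup N G \<and> N \<subseteq> H"
    using incl_subgroup[OF assms] subgroup_incl[OF _ assms] subgroup.subset by fastforce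
  show ?thesis unfolding K.normal_inv_iff nrm_def s using assms
    by (auto simp: subgroup.mem_carrier)
qed

lemma nrm_sg: "nrm G H N \<Longrightarrow> subgroup N G" by (simp add: nrm_def)
lemma nrm_sub: "nrm G H N \<Longrightarrow> N \<subseteq> H" by (simp add: nrm_def)
lemma nrm_conj: "nrm G H N \<Longrightarrow> h \<in> H \<Longrightarrow> x \<in> N \<Longrightarrow> h \<otimes> x \<otimes> inv h \<in> N" by (simp add: nrm_def)
lemma nrm_conj': assumes "subgroup H G" "nrm G H N" "h \<in> H" "x \<in> N" shows "inv h \<otimes> x \<otimes> h \<in> N"
proof -
  have "inv h \<in> H" by (rule subgroup.m_inv_closed[OF assms(1,3)])
  then have "inv h \<otimes> x \<otimes> inv (inv h) \<in> N" by (rule nrm_conj[OF assms(2) _ assms(4)])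
  moreover have "h \<in> carrier G" by (rule subgroup.mem_carrier[OF assms(1,3)])
  ultimately show ?thesis by simp
qed
lemma nrm_carr: "nrm G H N \<Longrightarrow> x \<in> N \<Longrightarrow> x \<in> carrier G"
  by (rule subgroup.mem_carrier[OF nrm_sg])
lemma nrm_one: "nrm G H N \<Longrightarrow> \<one> \<in> N"
  by (rule subgroup.one_closed[OF nrm_sg])
lemma nrm_m: "nrm G H N \<Longrightarrow> x \<in> N \<Longrightarrow> y \<in> N \<Longrightarrow> x \<otimes> y \<in> N"
  by (rule subgroup.m_closed[OF nrm_sg])
lemma nrm_inv: "nrm G H N \<Longrightarrow> x \<in> N \<Longrightarrow> inv x \<in> N"
  by (rule subgroup.m_inv_closed[OF nrm_sg])

lemma nrm_triv: "subgroup H G \<Longrightarrow> nrm G H {\<one>}"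
  unfolding nrm_def using triv_subgroup subgroup.one_closed subgroup.mem_carrier by fastforce

lemma nrm_Int: "nrm G H A \<Longrightarrow> nrm G H B \<Longrightarrow> nrm G H (A \<inter> B)"
  unfolding nrm_def using subgroups_Inter_pair by auto

lemma nrm_self: "subgroup H G \<Longrightarrow> nrm G H H"
  unfolding nrm_def by (auto intro!: subgroup.m_closed subgroup.m_inv_closed)

lemma sg_mult_sub: assumes "subgroup A G" "B \<subseteq> A" "C \<subseteq> A" shows "B <#> C \<subseteq> A"
proof
  fix x assume "x \<in> B <#> C"
  then obtain b c where "b \<in> B" "c \<in> C" "x = b \<otimes> c" unfolding set_mult_mem by blast
  then show "x \<in> A" using subgroup.m_closed[OF assms(1)] assms(2,3) by blast
qed

lemma sg_mult:
  assumes A: "subgroup A G" and B: "subgroup B G" and c: "\<And>a b. a \<in> A \<Longrightarrow> b \<in> B \<Longrightarrow> b \<otimes> a \<in> A <#> B"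
  shows "subgroup (A <#> B) G"
proof (rule subgroupI)
  show "A <#> B \<subseteq> carrier G" by (rule setmult_subset_G[OF subgroup.subset[OF A] subgroup.subset[OF B]])
  have "\<one> \<otimes> \<one> \<in> A <#> B" unfolding set_mult_mem using subgroup.one_closed[OF A] subgroup.one_closed[OF B] by blast
  then show "A <#> B \<noteq> {}" by blast
  fix x y assume x: "x \<in> A <#> B" and y: "y \<in> A <#> B"
  obtain a b where ab: "a \<in> A" "b \<in> B" "x = a \<otimes> b" using x set_mult_mem by metis
  obtain a' b' where ab': "a' \<in> A" "b' \<in> B" "y = a' \<otimes> b'" using y set_mult_mem by metis
  have cA: "\<And>a. a \<in> A \<Longrightarrow> a \<in> carrier G" by (rule subgroup.mem_carrier[OF A])
  have cB: "\<And>a. a \<in> B \<Longrightarrow> a \<in> carrier G" by (rule subgroup.mem_carrier[OF B])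
  obtain a2 b2 where 2: "a2 \<in> A" "b2 \<in> B" "inv b \<otimes> inv a = a2 \<otimes> b2"
    using c[OF subgroup.m_inv_closed[OF A ab(1)] subgroup.m_inv_closed[OF B ab(2)]] unfolding set_mult_mem by blast
  have "inv x = inv b \<otimes> inv a" using ab cA cB inv_mult_group by simp
  then show "inv x \<in> A <#> B" using 2 unfolding set_mult_mem by auto
  obtain a3 b3 where 3: "a3 \<in> A" "b3 \<in> B" "b \<otimes> a' = a3 \<otimes> b3"
    using c[OF ab'(1) ab(2)] unfolding set_mult_mem by blast
  have "x \<otimes> y = (a \<otimes> a3) \<otimes> (b3 \<otimes> b')"
  proof -
    have "x \<otimes> y = a \<otimes> (b \<otimes> a') \<otimes> b'" using ab ab' cA cB by (simp add: m_assoc)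
    also have "\<dots> = a \<otimes> (a3 \<otimes> b3) \<otimes> b'" using 3 by simp
    also have "\<dots> = (a \<otimes> a3) \<otimes> (b3 \<otimes> b')" using ab ab' 3 cA cB by (simp add: m_assoc)
    finally show ?thesis .
  qed
  moreover have "a \<otimes> a3 \<in> A" by (rule subgroup.m_closed[OF A ab(1) 3(1)])
  moreover have "b3 \<otimes> b' \<in> B" by (rule subgroup.m_closed[OF B 3(2) ab'(2)])
  ultimately show "x \<otimes> y \<in> A <#> B" unfolding set_mult_mem by blast
qed

lemma nrm_comm_elem:
  assumes "subgroup H G" "nrm G H B" "a \<in> H" "b \<in> B"
  shows "b \<otimes> a = a \<otimes> (inv a \<otimes> b \<otimes> a)" "inv a \<otimes> b \<otimes> a \<in> B"
proof -
  have c: "a \<in> carrier G" "b \<in> carrier G" using subgroup.mem_carrier[OF assms(1,3)] nrm_carr[OF assms(2,4)] by auto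
  show "b \<otimes> a = a \<otimes> (inv a \<otimes> b \<otimes> a)" using c by (simp add: m_assoc[symmetric])
  show "inv a \<otimes> b \<otimes> a \<in> B" by (rule nrm_conj'[OF assms])
qed

lemma sg_mult_nrm:
  assumes "subgroup H G" "subgroup A G" "A \<subseteq> H" "nrm G H B"
  shows "subgroup (A <#> B) G"
proof (rule sg_mult)
  show "subgroup A G" "subgroup B G" using assms(2) nrm_sg[OF assms(4)] by auto
  fix a b assume "a \<in> A" "b \<in> B"
  moreover have "a \<in> H" using \<open>a \<in> A\<close> assms(3) by blast
  ultimately show "b \<otimes> a \<in> A <#> B" using nrm_comm_elem[OF assms(1,4), of a b]
    unfolding set_mult_mem by blast
qed

lemma nrm_mult:
  assumes H: "subgroup H G" and A: "nrm G H A" and B: "nrm G H B"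
  shows "nrm G H (A <#> B)"
  unfolding nrm_def
proof (intro conjI ballI)
  show "subgroup (A <#> B) G" by (rule sg_mult_nrm[OF H nrm_sg[OF A] nrm_sub[OF A] B])
  show "A <#> B \<subseteq> H" by (rule sg_mult_sub[OF H nrm_sub[OF A] nrm_sub[OF B]])
  fix h x assume h: "h \<in> H" and x: "x \<in> A <#> B"
  obtain a b where ab: "a \<in> A" "b \<in> B" "x = a \<otimes> b" using x set_mult_mem by metis
  have c: "h \<in> carrier G" "a \<in> carrier G" "b \<in> carrier G" using subgroup.mem_carrier[OF H h] nrm_carr[OF A ab(1)] nrm_carr[OF B ab(2)] by auto
  have "h \<otimes> x \<otimes> inv h = (h \<otimes> a \<otimes> inv h) \<otimes> (h \<otimes> b \<otimes> inv h)"
    using c ab by (simp add: m_assoc)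
  then show "h \<otimes> x \<otimes> inv h \<in> A <#> B" using nrm_conj[OF A h] nrm_conj[OF B h] ab
    unfolding set_mult_mem by blast
qed

lemma nrm_mult_comm:
  assumes "subgroup H G" "subgroup A G" "A \<subseteq> H" "nrm G H B"
  shows "A <#> B = B <#> A"
proof -
  have "B <#> A \<subseteq> A <#> B"
  proof
    fix x assume "x \<in> B <#> A"
    then obtain b a where ab: "b \<in> B" "a \<in> A" "x = b \<otimes> a" unfolding set_mult_mem by blast
    then have "a \<in> H" using assms(3) by blast
    then have "x = a \<otimes> (inv a \<otimes> b \<otimes> a)" "inv a \<otimes> b \<otimes> a \<in> B" using nrm_comm_elem[OF assms(1,4)] ab by auto
    then show "x \<in> A <#> B" using ab(2) unfolding set_mult_mem by blast
  qed
  moreover have "A <#> B \<subseteq> B <#> A"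
  proof
    fix x assume "x \<in> A <#> B"
    then obtain a b where ab: "a \<in> A" "b \<in> B" "x = a \<otimes> b" using set_mult_mem by metis
    have c: "a \<in> carrier G" "b \<in> carrier G" using subgroup.mem_carrier[OF assms(2) ab(1)] nrm_carr[OF assms(4) ab(2)] by auto
    have "x = (a \<otimes> b \<otimes> inv a) \<otimes> a" using ab c by (simp add: m_assoc)
    moreover have "a \<in> H" using ab(1) assms(3) by blast
    then have "a \<otimes> b \<otimes> inv a \<in> B" using nrm_conj[OF assms(4) _ ab(2)] by blast
    ultimately show "x \<in> B <#> A" using ab unfolding set_mult_mem by blast
  qed
  ultimately show ?thesis by blast
qed

lemma sg_mult_one_left: assumes "subgroup A G" "B \<subseteq> carrier G" shows "B \<subseteq> A <#> B"
proof
  fix x assume "x \<in> B"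
  then have "x = \<one> \<otimes> x" "x \<in> B" using assms by auto
  then show "x \<in> A <#> B" using subgroup.one_closed[OF assms(1)] unfolding set_mult_mem by blast
qed

lemma dedekind1:
  assumes A: "subgroup A G" and B: "subgroup B G" and Z: "subgroup Z G" and "B \<subseteq> A"
  shows "A \<inter> (B <#> Z) = B <#> (A \<inter> Z)"
proof
  show "B <#> (A \<inter> Z) \<subseteq> A \<inter> (B <#> Z)"
  proof
    fix x assume "x \<in> B <#> (A \<inter> Z)"
    then obtain b z where bz: "b \<in> B" "z \<in> A \<inter> Z" "x = b \<otimes> z" unfolding set_mult_mem by blast
    have "b \<otimes> z \<in> A" using subgroup.m_closed[OF A] bz assms(4) by blast
    then show "x \<in> A \<inter> (B <#> Z)" using bz by (auto simp: set_mult_mem)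
  qed
  show "A \<inter> (B <#> Z) \<subseteq> B <#> (A \<inter> Z)"
  proof
    fix x assume x: "x \<in> A \<inter> (B <#> Z)"
    then have "x \<in> B <#> Z" by blast
    then obtain b z where bz: "b \<in> B" "z \<in> Z" "x = b \<otimes> z" unfolding set_mult_mem by blast
    have c: "b \<in> carrier G" "z \<in> carrier G" using subgroup.mem_carrier[OF B bz(1)] subgroup.mem_carrier[OF Z bz(2)] by auto
    have "z = inv b \<otimes> x" using bz c by (simp add: m_assoc[symmetric])
    moreover have "inv b \<in> A" using subgroup.m_inv_closed[OF A] bz(1) assms(4) by blast
    ultimately have "z \<in> A" using subgroup.m_closed[OF A] x by simp
    then show "x \<in> B <#> (A \<inter> Z)" using bz unfolding set_mult_mem by blast
  qed
qed

lemma dedekind2: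
  assumes M: "subgroup M G" and A: "subgroup A G" and N: "subgroup N G" and "N \<subseteq> M"
  shows "M \<inter> (A <#> N) = (M \<inter> A) <#> N"
proof
  show "(M \<inter> A) <#> N \<subseteq> M \<inter> (A <#> N)"
  proof
    fix x assume "x \<in> (M \<inter> A) <#> N"
    then obtain b z where bz: "b \<in> M \<inter> A" "z \<in> N" "x = b \<otimes> z" unfolding set_mult_mem by blast
    have "b \<otimes> z \<in> M" using subgroup.m_closed[OF M] bz assms(4) by blast
    then show "x \<in> M \<inter> (A <#> N)" using bz by (auto simp: set_mult_mem)
  qed
  show "M \<inter> (A <#> N) \<subseteq> (M \<inter> A) <#> N"
  proof
    fix x assume x: "x \<in> M \<inter> (A <#> N)"
    then have "x \<in> A <#> N" by blast
    then obtain a z where bz: "a \<in> A" "z \<in> N" "x = a \<otimes> z" unfolding set_mult_mem by blast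
    have c: "a \<in> carrier G" "z \<in> carrier G" using subgroup.mem_carrier[OF A bz(1)] subgroup.mem_carrier[OF N bz(2)] by auto
    have "a = x \<otimes> inv z" using bz c by (simp add: m_assoc)
    moreover have "inv z \<in> M" using subgroup.m_inv_closed[OF M] bz(2) assms(4) by blast
    ultimately have "a \<in> M" using subgroup.m_closed[OF M] x by simp
    then show "x \<in> (M \<inter> A) <#> N" using bz unfolding set_mult_mem by blast
  qed
qed


lemma sg_mult_absorb: assumes "subgroup A G" "B \<subseteq> A" "\<one> \<in> B" shows "A <#> B = A"
proof
  show "A <#> B \<subseteq> A" by (rule sg_mult_sub[OF assms(1) subset_refl assms(2)])
  show "A \<subseteq> A <#> B"
  proof
    fix x assume x: "x \<in> A"
    then have "x = x \<otimes> \<one>" using subgroup.mem_carrier[OF assms(1)] by simp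
    then show "x \<in> A <#> B" using x assms(3) unfolding set_mult_mem by blast
  qed
qed

lemma sg_mult_absorb': assumes "subgroup A G" "B \<subseteq> A" "\<one> \<in> B" shows "B <#> A = A"
proof
  show "B <#> A \<subseteq> A" by (rule sg_mult_sub[OF assms(1) assms(2) subset_refl])
  show "A \<subseteq> B <#> A"
  proof
    fix x assume x: "x \<in> A"
    then have "x = \<one> \<otimes> x" using subgroup.mem_carrier[OF assms(1)] by simp
    then show "x \<in> B <#> A" using x assms(3) unfolding set_mult_mem by blast
  qed
qed

end


definition cf :: "('a,'b) monoid_scheme \<Rightarrow> 'a set \<Rightarrow> 'a set \<Rightarrow> 'a set \<Rightarrow> bool" where
 "cf G H A B \<longleftrightarrow> nrm G H A \<and> nrm G H B \<and> B \<subset> A \<and> (\<forall>N. nrm G H N \<and> B \<subseteq> N \<and> N \<subseteq> A \<longrightarrow> N = B \<or> N = A)"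

definition cent :: "('a,'b) monoid_scheme \<Rightarrow> 'a set \<Rightarrow> 'a set \<Rightarrow> 'a set \<Rightarrow> 'a set" where
 "cent G H A B = {g \<in> H. \<forall>a\<in>A. g \<otimes>\<^bsub>G\<^esub> a \<otimes>\<^bsub>G\<^esub> inv\<^bsub>G\<^esub> g \<otimes>\<^bsub>G\<^esub> inv\<^bsub>G\<^esub> a \<in> B}"

context group begin

lemma cf_iff: "subgroup H G \<Longrightarrow> chief_factor (G\<lparr>carrier:=H\<rparr>) A B \<longleftrightarrow> cf G H A B"
  by (simp add: chief_factor_def cf_def nrm_iff)

lemma cent_iff:
  assumes "subgroup H G" "A \<subseteq> H"
  shows "centralizer_factor (G\<lparr>carrier:=H\<rparr>) A B = cent G H A B"
proof -
  have e: "\<And>h. h \<in> A \<Longrightarrow> inv\<^bsub>G\<lparr>carrier:=H\<rparr>\<^esub> h = inv h" using assms m_inv_consistent by blast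
  have e2: "\<And>h. h \<in> H \<Longrightarrow> inv\<^bsub>G\<lparr>carrier:=H\<rparr>\<^esub> h = inv h" using assms m_inv_consistent by blast
  show ?thesis unfolding centralizer_factor_def cent_def using e e2 by auto
qed

lemma rcos_eq:
  assumes "subgroup B G" "x \<in> carrier G" "y \<in> carrier G"
  shows "B #> x = B #> y \<longleftrightarrow> x \<otimes> inv y \<in> B"
proof
  assume e: "B #> x = B #> y"
  have "x \<in> B #> x" using assms subgroup.one_closed[OF assms(1)] unfolding r_coset_mem by force
  then have "x \<in> B #> y" using e by simp
  then show "x \<otimes> inv y \<in> B" using subgroup.rcos_module[OF assms(1) is_group assms(3,2)] by simp
next
  assume "x \<otimes> inv y \<in> B"
  then have "x \<in> B #> y" using subgroup.rcos_module[OF assms(1) is_group assms(3,2)] by simp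
  then show "B #> x = B #> y" using repr_independence[OF _ assms(3,1)] by simp
qed

lemma rcos_self: "subgroup B G \<Longrightarrow> x \<in> carrier G \<Longrightarrow> x \<in> B #> x"
  using subgroup.one_closed unfolding r_coset_mem by force

lemma rcos_one: "subgroup B G \<Longrightarrow> B #> \<one> = B"
  using coset_mult_one subgroup.subset by blast

lemma rcos_mult_nrm:
  assumes H: "subgroup H G" and B: "nrm G H B" and x: "x \<in> H" and y: "y \<in> H"
  shows "(B #> x) <#> (B #> y) = B #> (x \<otimes> y)"
proof
  have cx: "x \<in> carrier G" "y \<in> carrier G" using subgroup.mem_carrier[OF H] x y by auto
  show "(B #> x) <#> (B #> y) \<subseteq> B #> (x \<otimes> y)"
  proof
    fix z assume "z \<in> (B #> x) <#> (B #> y)"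
    then obtain u v where uv: "u \<in> B #> x" "v \<in> B #> y" "z = u \<otimes> v" unfolding set_mult_mem by blast
    obtain b where "b \<in> B" "u = b \<otimes> x" using uv(1) unfolding r_coset_mem by blast
    moreover obtain b' where "b' \<in> B" "v = b' \<otimes> y" using uv(2) unfolding r_coset_mem by blast
    ultimately have bb: "b \<in> B" "b' \<in> B" "z = (b \<otimes> x) \<otimes> (b' \<otimes> y)" using uv by auto
    have cb: "b \<in> carrier G" "b' \<in> carrier G" using nrm_carr[OF B] bb by auto
    have "z = (b \<otimes> (x \<otimes> b' \<otimes> inv x)) \<otimes> (x \<otimes> y)" using bb cb cx by (simp add: m_assoc)
    moreover have "b \<otimes> (x \<otimes> b' \<otimes> inv x) \<in> B" using nrm_m[OF B bb(1) nrm_conj[OF B x bb(2)]] .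
    ultimately show "z \<in> B #> (x \<otimes> y)" unfolding r_coset_mem by blast
  qed
  show "B #> (x \<otimes> y) \<subseteq> (B #> x) <#> (B #> y)"
  proof
    fix z assume "z \<in> B #> (x \<otimes> y)"
    then obtain b where b: "b \<in> B" "z = b \<otimes> (x \<otimes> y)" unfolding r_coset_mem by blast
    have cb: "b \<in> carrier G" using nrm_carr[OF B] b by auto
    have "z = (b \<otimes> x) \<otimes> (\<one> \<otimes> y)" using b cb cx by (simp add: m_assoc)
    moreover have "b \<otimes> x \<in> B #> x" "\<one> \<otimes> y \<in> B #> y" using b(1) nrm_one[OF B] unfolding r_coset_mem by blast+
    ultimately show "z \<in> (B #> x) <#> (B #> y)" unfolding set_mult_mem by blast
  qed
qed

lemma cent_mem: "g \<in> cent G H A B \<longleftrightarrow> g \<in> H \<and> (\<forall>a\<in>A. g \<otimes> a \<otimes> inv g \<otimes> inv a \<in> B)"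
  unfolding cent_def by auto

lemma cent_nrm:
  assumes H: "subgroup H G" and A: "nrm G H A" and B: "nrm G H B"
  shows "nrm G H (cent G H A B)"
proof -
  have cH: "\<And>h. h \<in> H \<Longrightarrow> h \<in> carrier G" using subgroup.mem_carrier[OF H] by auto
  have cA: "\<And>h. h \<in> A \<Longrightarrow> h \<in> carrier G" using nrm_carr[OF A] by auto
  have cB: "\<And>h. h \<in> B \<Longrightarrow> h \<in> carrier G" using nrm_carr[OF B] by auto
  let ?C = "cent G H A B"
  have sub: "?C \<subseteq> H" unfolding cent_def by auto
  have one: "\<one> \<in> ?C" unfolding cent_mem using cA nrm_one[OF B] subgroup.one_closed[OF H] by auto
  have mul: "c1 \<otimes> c2 \<in> ?C" if c1: "c1 \<in> ?C" and c2: "c2 \<in> ?C" for c1 c2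
    unfolding cent_mem
  proof (intro conjI ballI)
    have h1: "c1 \<in> H" and h2: "c2 \<in> H" using c1 c2 unfolding cent_mem by auto
    show "c1 \<otimes> c2 \<in> H" using subgroup.m_closed[OF H h1 h2] .
    fix a assume a: "a \<in> A"
    have k: "c2 \<otimes> a \<otimes> inv c2 \<otimes> inv a \<in> B" using c2 a unfolding cent_mem by auto
    have k1: "c1 \<otimes> a \<otimes> inv c1 \<otimes> inv a \<in> B" using c1 a unfolding cent_mem by auto
    have "c1 \<otimes> c2 \<otimes> a \<otimes> inv (c1 \<otimes> c2) \<otimes> inv a
        = (c1 \<otimes> (c2 \<otimes> a \<otimes> inv c2 \<otimes> inv a) \<otimes> inv c1) \<otimes> (c1 \<otimes> a \<otimes> inv c1 \<otimes> inv a)"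
      using cH[OF h1] cH[OF h2] cA[OF a] by (simp add: m_assoc inv_mult_group)
    then show "c1 \<otimes> c2 \<otimes> a \<otimes> inv (c1 \<otimes> c2) \<otimes> inv a \<in> B"
      using nrm_m[OF B nrm_conj[OF B h1 k] k1] by simp
  qed
  have inv: "inv c \<in> ?C" if c: "c \<in> ?C" for c
    unfolding cent_mem
  proof (intro conjI ballI)
    have h: "c \<in> H" using c unfolding cent_mem by auto
    show "inv c \<in> H" using subgroup.m_inv_closed[OF H h] .
    fix a assume a: "a \<in> A"
    have a': "inv c \<otimes> a \<otimes> c \<in> A" using nrm_conj'[OF H A h a] .
    have k: "c \<otimes> (inv c \<otimes> a \<otimes> c) \<otimes> inv c \<otimes> inv (inv c \<otimes> a \<otimes> c) \<in> B" using c a' unfolding cent_mem by auto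
    have "inv c \<otimes> a \<otimes> inv (inv c) \<otimes> inv a = inv (c \<otimes> (inv c \<otimes> a \<otimes> c) \<otimes> inv c \<otimes> inv (inv c \<otimes> a \<otimes> c))"
      using cH[OF h] cA[OF a] by (simp add: m_assoc inv_mult_group)
    then show "inv c \<otimes> a \<otimes> inv (inv c) \<otimes> inv a \<in> B" using nrm_inv[OF B k] by simp
  qed
  have norm: "h \<otimes> c \<otimes> inv h \<in> ?C" if h: "h \<in> H" and c: "c \<in> ?C" for h c
    unfolding cent_mem
  proof (intro conjI ballI)
    have hc: "c \<in> H" using c unfolding cent_mem by auto
    show "h \<otimes> c \<otimes> inv h \<in> H" using H h hc by (simp add: subgroup.m_closed subgroup.m_inv_closed)
    fix a assume a: "a \<in> A"
    have a': "inv h \<otimes> a \<otimes> h \<in> A" using nrm_conj'[OF H A h a] .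
    have k: "c \<otimes> (inv h \<otimes> a \<otimes> h) \<otimes> inv c \<otimes> inv (inv h \<otimes> a \<otimes> h) \<in> B" using c a' unfolding cent_mem by auto
    have "h \<otimes> c \<otimes> inv h \<otimes> a \<otimes> inv (h \<otimes> c \<otimes> inv h) \<otimes> inv a
       = h \<otimes> (c \<otimes> (inv h \<otimes> a \<otimes> h) \<otimes> inv c \<otimes> inv (inv h \<otimes> a \<otimes> h)) \<otimes> inv h"
      using cH[OF h] cH[OF hc] cA[OF a] by (simp add: m_assoc inv_mult_group)
    then show "h \<otimes> c \<otimes> inv h \<otimes> a \<otimes> inv (h \<otimes> c \<otimes> inv h) \<otimes> inv a \<in> B"
      using nrm_conj[OF B h k] by simp
  qed
  have "subgroup ?C G"
  proof (rule subgroupI)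
    show "?C \<subseteq> carrier G" using sub cH by blast
    show "?C \<noteq> {}" using one by blast
  qed (use mul inv in auto)
  then show ?thesis unfolding nrm_def using sub norm by blast
qed

end


context group begin

lemma conj_set:
  assumes H: "subgroup H G" and A: "nrm G H A" and B: "nrm G H B" and BA: "B \<subseteq> A"
    and g: "g \<in> H" and x: "x \<in> A"
  shows "{s \<otimes> b \<otimes> inv s | s b. s \<in> cent G H A B #> g \<and> b \<in> B #> x} = B #> (g \<otimes> x \<otimes> inv g)"
proof
  have cH: "\<And>h. h \<in> H \<Longrightarrow> h \<in> carrier G" using subgroup.mem_carrier[OF H] by auto
  have cA: "\<And>h. h \<in> A \<Longrightarrow> h \<in> carrier G" using nrm_carr[OF A] by auto
  have cB: "\<And>h. h \<in> B \<Longrightarrow> h \<in> carrier G" using nrm_carr[OF B] by auto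
  have AH: "A \<subseteq> H" using nrm_sub[OF A] .
  let ?C = "cent G H A B"
  show "{s \<otimes> b \<otimes> inv s | s b. s \<in> ?C #> g \<and> b \<in> B #> x} \<subseteq> B #> (g \<otimes> x \<otimes> inv g)"
  proof
    fix z assume "z \<in> {s \<otimes> b \<otimes> inv s | s b. s \<in> ?C #> g \<and> b \<in> B #> x}"
    then obtain s b where sb: "z = s \<otimes> b \<otimes> inv s" "s \<in> ?C #> g" "b \<in> B #> x" by blast
    obtain c where c: "c \<in> ?C" "s = c \<otimes> g" using sb(2) unfolding r_coset_mem by blast
    obtain y where y: "y \<in> B" "b = y \<otimes> x" using sb(3) unfolding r_coset_mem by blast
    have cH': "c \<in> H" using c unfolding cent_mem by auto
    have yx: "y \<otimes> x \<in> A" using nrm_m[OF A] y BA x by blast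
    define w where "w = g \<otimes> (y \<otimes> x) \<otimes> inv g"
    have wA: "w \<in> A" unfolding w_def using nrm_conj[OF A g yx] .
    have k: "c \<otimes> w \<otimes> inv c \<otimes> inv w \<in> B" using c wA unfolding cent_mem by auto
    have gy: "g \<otimes> y \<otimes> inv g \<in> B" using nrm_conj[OF B g y(1)] .
    have "z = (c \<otimes> w \<otimes> inv c \<otimes> inv w) \<otimes> (g \<otimes> y \<otimes> inv g) \<otimes> (g \<otimes> x \<otimes> inv g)"
      unfolding sb(1) c(2) y(2) w_def using cH[OF cH'] cH[OF g] cB[OF y(1)] cA[OF x]
      by (simp add: m_assoc inv_mult_group)
    moreover have "(c \<otimes> w \<otimes> inv c \<otimes> inv w) \<otimes> (g \<otimes> y \<otimes> inv g) \<in> B" using nrm_m[OF B k gy] .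
    ultimately show "z \<in> B #> (g \<otimes> x \<otimes> inv g)" unfolding r_coset_mem by blast
  qed
  show "B #> (g \<otimes> x \<otimes> inv g) \<subseteq> {s \<otimes> b \<otimes> inv s | s b. s \<in> ?C #> g \<and> b \<in> B #> x}"
  proof
    fix z assume "z \<in> B #> (g \<otimes> x \<otimes> inv g)"
    then obtain y where y: "y \<in> B" "z = y \<otimes> (g \<otimes> x \<otimes> inv g)" unfolding r_coset_mem by blast
    have one: "\<one> \<in> ?C" using nrm_one[OF cent_nrm[OF H A B]] .
    have s: "g \<in> ?C #> g" using one cH[OF g] unfolding r_coset_mem by (metis l_one)
    have y': "inv g \<otimes> y \<otimes> g \<in> B" using nrm_conj'[OF H B g y(1)] .
    have b: "(inv g \<otimes> y \<otimes> g) \<otimes> x \<in> B #> x" using y' unfolding r_coset_mem by blast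
    have "z = g \<otimes> ((inv g \<otimes> y \<otimes> g) \<otimes> x) \<otimes> inv g"
      unfolding y(2) using cH[OF g] cB[OF y(1)] cA[OF x] by (simp add: m_assoc)
    then show "z \<in> {s \<otimes> b \<otimes> inv s | s b. s \<in> ?C #> g \<and> b \<in> B #> x}" using s b by blast
  qed
qed

lemma sdf_carrier:
  assumes H: "subgroup H G" and A: "nrm G H A"
  shows "carrier (semidirect_factor (G\<lparr>carrier:=H\<rparr>) A B)
     = {B #> a | a. a \<in> A} \<times> {cent G H A B #> h | h. h \<in> H}"
  unfolding semidirect_factor_def Let_def cent_iff[OF H nrm_sub[OF A]]
  by (auto simp: RCOSETS_def)

lemma sdf_one:
  assumes H: "subgroup H G" and A: "nrm G H A"
  shows "one (semidirect_factor (G\<lparr>carrier:=H\<rparr>) A B) = (B, cent G H A B)"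
  unfolding semidirect_factor_def Let_def cent_iff[OF H nrm_sub[OF A]] by simp

lemma sdf_mult:
  assumes H: "subgroup H G" and A: "nrm G H A" and B: "nrm G H B" and BA: "B \<subseteq> A"
    and x: "x \<in> A" and x': "x' \<in> A" and g: "g \<in> H" and g': "g' \<in> H"
  shows "(B #> x, cent G H A B #> g) \<otimes>\<^bsub>semidirect_factor (G\<lparr>carrier:=H\<rparr>) A B\<^esub> (B #> x', cent G H A B #> g')
       = (B #> (x \<otimes> (g \<otimes> x' \<otimes> inv g)), cent G H A B #> (g \<otimes> g'))"
proof -
  let ?C = "cent G H A B"
  have CH: "?C #> g \<subseteq> H" using nrm_sub[OF cent_nrm[OF H A B]] g subgroup.m_closed[OF H]
    unfolding r_coset_def by blast
  have e: "{s \<otimes> b \<otimes> inv\<^bsub>G\<lparr>carrier:=H\<rparr>\<^esub> s | s b. s \<in> ?C #> g \<and> b \<in> B #> x'}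
     = {s \<otimes> b \<otimes> inv s | s b. s \<in> ?C #> g \<and> b \<in> B #> x'}"
  proof -
    have "\<And>s. s \<in> ?C #> g \<Longrightarrow> inv\<^bsub>G\<lparr>carrier:=H\<rparr>\<^esub> s = inv s" using CH H m_inv_consistent by blast
    then show ?thesis by force
  qed
  have xH: "x \<in> H" "x' \<in> H" using x x' nrm_sub[OF A] by auto
  have gx: "g \<otimes> x' \<otimes> inv g \<in> H" using nrm_sub[OF A] nrm_conj[OF A g x'] by blast
  show ?thesis
    unfolding semidirect_factor_def Let_def cent_iff[OF H nrm_sub[OF A]]
    apply simp
    unfolding e conj_set[OF H A B BA g x']
    using rcos_mult_nrm[OF H B xH(1) gx] rcos_mult_nrm[OF H cent_nrm[OF H A B] g g'] by simp
qed

end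


lemma in_class_iso: "S' \<cong> S \<Longrightarrow> in_class F S \<Longrightarrow> in_class F S'"
  unfolding in_class_def using iso_trans by blast

lemma in_class_self: "group Q \<Longrightarrow> finite (carrier Q) \<Longrightarrow> F Q \<Longrightarrow> in_class F Q"
  unfolding in_class_def using iso_refl by blast

lemma hom_img_nat:
  fixes Q :: "nat monoid" and T :: "('c,'d) monoid_scheme"
  assumes form: "formation F" and inX: "in_class F Q" and grp: "group Q" and fin: "finite (carrier Q)"
    and onto: "\<psi> ` carrier Q = carrier T"
    and mult: "\<And>x y. x \<in> carrier Q \<Longrightarrow> y \<in> carrier Q \<Longrightarrow> \<psi> (x \<otimes>\<^bsub>Q\<^esub> y) = \<psi> x \<otimes>\<^bsub>T\<^esub> \<psi> y"
  shows "in_class F T"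
proof -
  interpret Q: group Q by (rule grp)
  define K where "K = {y \<in> carrier Q. \<psi> y = \<psi> \<one>\<^bsub>Q\<^esub>}"
  have Kc: "K \<subseteq> carrier Q" unfolding K_def by auto
  have keq: "\<psi> (k \<otimes>\<^bsub>Q\<^esub> y) = \<psi> y" if "k \<in> K" "y \<in> carrier Q" for k y
  proof -
    have "\<psi> (k \<otimes>\<^bsub>Q\<^esub> y) = \<psi> k \<otimes>\<^bsub>T\<^esub> \<psi> y" using that Kc mult by auto
    also have "\<dots> = \<psi> \<one>\<^bsub>Q\<^esub> \<otimes>\<^bsub>T\<^esub> \<psi> y" using that unfolding K_def by auto
    also have "\<dots> = \<psi> (\<one>\<^bsub>Q\<^esub> \<otimes>\<^bsub>Q\<^esub> y)" by (rule mult[OF Q.one_closed that(2), symmetric])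
    finally show ?thesis using that by simp
  qed
  have keq': "\<psi> (y \<otimes>\<^bsub>Q\<^esub> k) = \<psi> y" if "k \<in> K" "y \<in> carrier Q" for k y
  proof -
    have "\<psi> (y \<otimes>\<^bsub>Q\<^esub> k) = \<psi> y \<otimes>\<^bsub>T\<^esub> \<psi> k" using that Kc mult by auto
    also have "\<dots> = \<psi> y \<otimes>\<^bsub>T\<^esub> \<psi> \<one>\<^bsub>Q\<^esub>" using that unfolding K_def by auto
    also have "\<dots> = \<psi> (y \<otimes>\<^bsub>Q\<^esub> \<one>\<^bsub>Q\<^esub>)" by (rule mult[OF that(2) Q.one_closed, symmetric])
    finally show ?thesis using that by simp
  qed
  have invK: "\<psi> (a \<otimes>\<^bsub>Q\<^esub> inv\<^bsub>Q\<^esub> b) = \<psi> \<one>\<^bsub>Q\<^esub>" if "a \<in> carrier Q" "b \<in> carrier Q" "\<psi> a = \<psi> b" for a b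
  proof -
    have "\<psi> (a \<otimes>\<^bsub>Q\<^esub> inv\<^bsub>Q\<^esub> b) = \<psi> a \<otimes>\<^bsub>T\<^esub> \<psi> (inv\<^bsub>Q\<^esub> b)" using that mult by auto
    also have "\<dots> = \<psi> b \<otimes>\<^bsub>T\<^esub> \<psi> (inv\<^bsub>Q\<^esub> b)" using that by simp
    also have "\<dots> = \<psi> (b \<otimes>\<^bsub>Q\<^esub> inv\<^bsub>Q\<^esub> b)" by (rule mult[OF that(2) Q.inv_closed[OF that(2)], symmetric])
    finally show ?thesis using that by simp
  qed
  have nK: "K \<lhd> Q"
  proof (rule Q.normal_invI)
    show "subgroup K Q"
    proof (rule Q.subgroupI)
      show "K \<subseteq> carrier Q" by (rule Kc)
      show "K \<noteq> {}" unfolding K_def by auto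
      fix a b assume a: "a \<in> K" and b: "b \<in> K"
      have "b \<in> carrier Q" "a \<in> carrier Q" using a b Kc by auto
      then show "a \<otimes>\<^bsub>Q\<^esub> b \<in> K" using keq[OF a] b unfolding K_def by auto
      have "\<psi> (\<one>\<^bsub>Q\<^esub> \<otimes>\<^bsub>Q\<^esub> inv\<^bsub>Q\<^esub> a) = \<psi> \<one>\<^bsub>Q\<^esub>" using invK[of "\<one>\<^bsub>Q\<^esub>" a] a unfolding K_def by auto
      then show "inv\<^bsub>Q\<^esub> a \<in> K" using a Kc unfolding K_def by auto
    qed
    fix x h assume x: "x \<in> carrier Q" and h: "h \<in> K"
    have "\<psi> (x \<otimes>\<^bsub>Q\<^esub> h \<otimes>\<^bsub>Q\<^esub> inv\<^bsub>Q\<^esub> x) = \<psi> (x \<otimes>\<^bsub>Q\<^esub> h) \<otimes>\<^bsub>T\<^esub> \<psi> (inv\<^bsub>Q\<^esub> x)"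
      using x h Kc mult by auto
    also have "\<dots> = \<psi> x \<otimes>\<^bsub>T\<^esub> \<psi> (inv\<^bsub>Q\<^esub> x)" using keq' h x by simp
    also have "\<dots> = \<psi> \<one>\<^bsub>Q\<^esub>" using mult x by (metis Q.inv_closed Q.r_inv)
    finally show "x \<otimes>\<^bsub>Q\<^esub> h \<otimes>\<^bsub>Q\<^esub> inv\<^bsub>Q\<^esub> x \<in> K" using x h Kc unfolding K_def by auto
  qed
  interpret N: normal K Q by (rule nK)
  have inQ: "in_class F (Q Mod K)" using form inX nK grp fin unfolding formation_def by blast
  define \<theta> where "\<theta> = (\<lambda>C. \<psi> (SOME y. y \<in> C))"
  have th: "\<theta> (K #>\<^bsub>Q\<^esub> y) = \<psi> y" if y: "y \<in> carrier Q" for y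
  proof -
    have "y \<in> K #>\<^bsub>Q\<^esub> y" using y N.one_closed unfolding r_coset_mem by force
    then have "(SOME y'. y' \<in> K #>\<^bsub>Q\<^esub> y) \<in> K #>\<^bsub>Q\<^esub> y" by (rule someI)
    then obtain k where "k \<in> K" "(SOME y'. y' \<in> K #>\<^bsub>Q\<^esub> y) = k \<otimes>\<^bsub>Q\<^esub> y" unfolding r_coset_mem by blast
    then show ?thesis unfolding \<theta>_def using keq y by simp
  qed
  have iso: "\<theta> \<in> iso (Q Mod K) T"
  proof (rule isoI)
    show "\<theta> \<in> hom (Q Mod K) T"
    proof (rule homI)
      fix C assume "C \<in> carrier (Q Mod K)"
      then obtain y where "y \<in> carrier Q" "C = K #>\<^bsub>Q\<^esub> y" unfolding carrier_FactGroup by blast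
      then show "\<theta> C \<in> carrier T" using th onto by auto
    next
      fix C D assume "C \<in> carrier (Q Mod K)" "D \<in> carrier (Q Mod K)"
      then obtain y z where yz: "y \<in> carrier Q" "C = K #>\<^bsub>Q\<^esub> y" "z \<in> carrier Q" "D = K #>\<^bsub>Q\<^esub> z"
        unfolding carrier_FactGroup by blast
      then have "C \<otimes>\<^bsub>Q Mod K\<^esub> D = K #>\<^bsub>Q\<^esub> (y \<otimes>\<^bsub>Q\<^esub> z)" using N.rcos_sum by simp
      then show "\<theta> (C \<otimes>\<^bsub>Q Mod K\<^esub> D) = \<theta> C \<otimes>\<^bsub>T\<^esub> \<theta> D" using th yz mult by simp
    qed
    show "bij_betw \<theta> (carrier (Q Mod K)) (carrier T)"
    proof (rule bij_betw_imageI)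
      show "inj_on \<theta> (carrier (Q Mod K))"
      proof (rule inj_onI)
        fix C D assume "C \<in> carrier (Q Mod K)" "D \<in> carrier (Q Mod K)" and e: "\<theta> C = \<theta> D"
        then obtain y z where yz: "y \<in> carrier Q" "C = K #>\<^bsub>Q\<^esub> y" "z \<in> carrier Q" "D = K #>\<^bsub>Q\<^esub> z"
          unfolding carrier_FactGroup by blast
        then have "\<psi> y = \<psi> z" using e th by simp
        then have "y \<otimes>\<^bsub>Q\<^esub> inv\<^bsub>Q\<^esub> z \<in> K" using invK yz unfolding K_def by auto
        then show "C = D" using yz Q.rcos_eq[OF N.subgroup_axioms] by simp
      qed
      show "\<theta> ` carrier (Q Mod K) = carrier T"
      proof
        show "\<theta> ` carrier (Q Mod K) \<subseteq> carrier T" using th onto unfolding carrier_FactGroup by auto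
        show "carrier T \<subseteq> \<theta> ` carrier (Q Mod K)"
        proof
          fix t assume "t \<in> carrier T"
          then obtain y where "y \<in> carrier Q" "t = \<psi> y" using onto by auto
          then have "K #>\<^bsub>Q\<^esub> y \<in> carrier (Q Mod K)" "t = \<theta> (K #>\<^bsub>Q\<^esub> y)" using th unfolding carrier_FactGroup by auto
          then show "t \<in> \<theta> ` carrier (Q Mod K)" by blast
        qed
      qed
    qed
  qed
  have "T \<cong> Q Mod K" using group.iso_sym[OF N.factorgroup_is_group] iso unfolding is_iso_def by blast
  then show ?thesis using in_class_iso inQ by blast
qed

lemma hom_img:
  fixes Q :: "('a,'b) monoid_scheme" and T :: "('c,'d) monoid_scheme"
  assumes form: "formation F" and inX: "in_class F Q" and grp: "group Q"
    and onto: "\<psi> ` carrier Q = carrier T"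
    and mult: "\<And>x y. x \<in> carrier Q \<Longrightarrow> y \<in> carrier Q \<Longrightarrow> \<psi> (x \<otimes>\<^bsub>Q\<^esub> y) = \<psi> x \<otimes>\<^bsub>T\<^esub> \<psi> y"
  shows "in_class F T"
proof -
  obtain H0 :: "nat monoid" where H0: "group H0" "finite (carrier H0)" "F H0" "Q \<cong> H0"
    using inX unfolding in_class_def by blast
  obtain \<phi> where phi: "\<phi> \<in> iso Q H0" using H0(4) unfolding is_iso_def by blast
  define \<chi> where "\<chi> = inv_into (carrier Q) \<phi>"
  have chi: "\<chi> \<in> iso H0 Q" unfolding \<chi>_def using group.iso_set_sym[OF grp phi] .
  have "in_class F H0" using in_class_self H0 by blast
  moreover have "(\<psi> \<circ> \<chi>) ` carrier H0 = carrier T" using chi onto unfolding iso_iff by (metis image_comp)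
  moreover have "(\<psi> \<circ> \<chi>) (x \<otimes>\<^bsub>H0\<^esub> y) = (\<psi> \<circ> \<chi>) x \<otimes>\<^bsub>T\<^esub> (\<psi> \<circ> \<chi>) y" if "x \<in> carrier H0" "y \<in> carrier H0" for x y
  proof -
    have "\<chi> x \<in> carrier Q" "\<chi> y \<in> carrier Q" "\<chi> (x \<otimes>\<^bsub>H0\<^esub> y) = \<chi> x \<otimes>\<^bsub>Q\<^esub> \<chi> y"
      using chi that unfolding iso_def hom_def by auto
    then show ?thesis using mult by simp
  qed
  ultimately show ?thesis using hom_img_nat[OF form _ H0(1,2)] by blast
qed


lemma sub_hom:
  fixes S :: "('a,'b) monoid_scheme" and T :: "('c,'d) monoid_scheme"
  assumes her: "hereditary_formation F" and inS: "in_class F S"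
    and U: "U \<subseteq> carrier S" and one: "\<one>\<^bsub>S\<^esub> \<in> U" and oo: "\<one>\<^bsub>S\<^esub> \<otimes>\<^bsub>S\<^esub> \<one>\<^bsub>S\<^esub> = \<one>\<^bsub>S\<^esub>"
    and cl: "\<And>u v. u \<in> U \<Longrightarrow> v \<in> U \<Longrightarrow> u \<otimes>\<^bsub>S\<^esub> v \<in> U"
    and rinv: "\<And>u. u \<in> U \<Longrightarrow> \<exists>v\<in>U. u \<otimes>\<^bsub>S\<^esub> v = \<one>\<^bsub>S\<^esub>"
    and onto: "f ` U = carrier T"
    and mult: "\<And>u v. u \<in> U \<Longrightarrow> v \<in> U \<Longrightarrow> f (u \<otimes>\<^bsub>S\<^esub> v) = f u \<otimes>\<^bsub>T\<^esub> f v"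
  shows "in_class F T"
proof -
  have form: "formation F" using her unfolding hereditary_formation_def by blast
  obtain H0 :: "nat monoid" where H0: "group H0" "finite (carrier H0)" "F H0" "S \<cong> H0"
    using inS unfolding in_class_def by blast
  interpret H0: group H0 by (rule H0(1))
  obtain \<phi> where phi: "\<phi> \<in> iso S H0" using H0(4) unfolding is_iso_def by blast
  have phic: "\<And>u. u \<in> carrier S \<Longrightarrow> \<phi> u \<in> carrier H0" using phi unfolding iso_def hom_def by auto
  have phim: "\<And>u v. u \<in> carrier S \<Longrightarrow> v \<in> carrier S \<Longrightarrow> \<phi> (u \<otimes>\<^bsub>S\<^esub> v) = \<phi> u \<otimes>\<^bsub>H0\<^esub> \<phi> v"
    using phi unfolding iso_def hom_def by auto
  have "inj_on \<phi> (carrier S)" using phi by (simp add: iso_def bij_betw_def)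
  then have inj: "inj_on \<phi> U" using U inj_on_subset by blast
  have one1: "\<phi> \<one>\<^bsub>S\<^esub> = \<one>\<^bsub>H0\<^esub>"
  proof -
    have c: "\<phi> \<one>\<^bsub>S\<^esub> \<in> carrier H0" using phic one U by auto
    have "\<phi> \<one>\<^bsub>S\<^esub> \<otimes>\<^bsub>H0\<^esub> \<phi> \<one>\<^bsub>S\<^esub> = \<phi> \<one>\<^bsub>S\<^esub>" using phim[of "\<one>\<^bsub>S\<^esub>" "\<one>\<^bsub>S\<^esub>"] one U oo by auto
    then show ?thesis using H0.l_cancel_one[OF c c] by simp
  qed
  define V where "V = \<phi> ` U"
  have sV: "subgroup V H0"
  proof (rule H0.subgroupI)
    show "V \<subseteq> carrier H0" unfolding V_def using phic U by auto
    show "V \<noteq> {}" unfolding V_def using one by auto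
    fix a assume "a \<in> V"
    then obtain u where u: "u \<in> U" "a = \<phi> u" unfolding V_def by auto
    obtain v where v: "v \<in> U" "u \<otimes>\<^bsub>S\<^esub> v = \<one>\<^bsub>S\<^esub>" using rinv[OF u(1)] by blast
    have cu: "\<phi> u \<in> carrier H0" "\<phi> v \<in> carrier H0" using phic u v U by auto
    have uvc: "u \<in> carrier S" "v \<in> carrier S" using u v U by auto
    have e: "\<phi> u \<otimes>\<^bsub>H0\<^esub> \<phi> v = \<one>\<^bsub>H0\<^esub>" using phim[OF uvc] v(2) one1 by simp
    have "inv\<^bsub>H0\<^esub> (\<phi> u) = \<phi> v"
    proof -
      have "inv\<^bsub>H0\<^esub> (\<phi> u) = inv\<^bsub>H0\<^esub> (\<phi> u) \<otimes>\<^bsub>H0\<^esub> (\<phi> u \<otimes>\<^bsub>H0\<^esub> \<phi> v)" using e cu by simp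
      also have "\<dots> = \<phi> v" using cu by (simp add: H0.m_assoc[symmetric])
      finally show ?thesis .
    qed
    then show "inv\<^bsub>H0\<^esub> a \<in> V" using u v unfolding V_def by auto
  next
    fix a b assume "a \<in> V" "b \<in> V"
    then obtain u v where uv: "u \<in> U" "a = \<phi> u" "v \<in> U" "b = \<phi> v" unfolding V_def by auto
    then have "u \<in> carrier S" "v \<in> carrier S" using U by auto
    then have "a \<otimes>\<^bsub>H0\<^esub> b = \<phi> (u \<otimes>\<^bsub>S\<^esub> v)" using phim uv by simp
    then show "a \<otimes>\<^bsub>H0\<^esub> b \<in> V" using cl uv unfolding V_def by auto
  qed
  have inH0: "in_class F H0" using in_class_self H0 by blast
  have inV: "in_class F (H0\<lparr>carrier := V\<rparr>)" using her H0 inH0 sV unfolding hereditary_formation_def by blast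
  define \<psi> where "\<psi> = (\<lambda>a. f (inv_into U \<phi> a))"
  have psi: "\<psi> (\<phi> u) = f u" if "u \<in> U" for u unfolding \<psi>_def using inv_into_f_f[OF inj that] by simp
  show ?thesis
  proof (rule hom_img[OF form inV H0.subgroup_imp_group[OF sV]])
    show "\<psi> ` carrier (H0\<lparr>carrier := V\<rparr>) = carrier T"
      using onto psi unfolding V_def by (auto simp: image_iff) (metis imageE psi)
  next
    fix a b assume "a \<in> carrier (H0\<lparr>carrier := V\<rparr>)" "b \<in> carrier (H0\<lparr>carrier := V\<rparr>)"
    then obtain u v where uv: "u \<in> U" "a = \<phi> u" "v \<in> U" "b = \<phi> v" unfolding V_def by auto
    then have "u \<in> carrier S" "v \<in> carrier S" using U by auto
    then have "a \<otimes>\<^bsub>H0\<lparr>carrier := V\<rparr>\<^esub> b = \<phi> (u \<otimes>\<^bsub>S\<^esub> v)" using phim uv by simp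
    then show "\<psi> (a \<otimes>\<^bsub>H0\<lparr>carrier := V\<rparr>\<^esub> b) = \<psi> a \<otimes>\<^bsub>T\<^esub> \<psi> b" using psi uv cl mult by simp
  qed
qed

lemma abelian_in_class:
  fixes A :: "('a,'b) monoid_scheme"
  assumes cn: "contains_nilpotent F" and A: "comm_group A" and fin: "finite (carrier A)"
  shows "in_class F A"
proof -
  interpret A: comm_group A by (rule A)
  obtain f where f: "bij_betw f (carrier A) {0..<card (carrier A)}" using ex_bij_betw_finite_nat[OF fin] by blast
  have inj: "inj_on f (carrier A)" using f unfolding bij_betw_def by auto
  define g where "g = inv_into (carrier A) f"
  have gf: "\<And>x. x \<in> carrier A \<Longrightarrow> g (f x) = x" unfolding g_def using inv_into_f_f[OF inj] by simp
  define B :: "nat monoid" where "B = \<lparr>carrier = f ` carrier A, monoid.mult = (\<lambda>x y. f (g x \<otimes>\<^bsub>A\<^esub> g y)), one = f \<one>\<^bsub>A\<^esub>\<rparr>"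
  have iso: "f \<in> iso A B"
  proof (rule isoI)
    show "f \<in> hom A B" unfolding hom_def B_def using gf by auto
    show "bij_betw f (carrier A) (carrier B)" unfolding B_def using inj by (simp add: bij_betw_def)
  qed
  have "comm_group (B\<lparr>one := f \<one>\<^bsub>A\<^esub>\<rparr>)" using A.iso_imp_img_comm_group[OF iso] .
  moreover have "B\<lparr>one := f \<one>\<^bsub>A\<^esub>\<rparr> = B" unfolding B_def by simp
  ultimately have cB: "comm_group B" by simp
  interpret B: comm_group B by (rule cB)
  have finB: "finite (carrier B)" unfolding B_def using fin by simp
  have "lower_central B 1 = {\<one>\<^bsub>B\<^esub>}"
  proof -
    have "{a \<otimes>\<^bsub>B\<^esub> b \<otimes>\<^bsub>B\<^esub> inv\<^bsub>B\<^esub> a \<otimes>\<^bsub>B\<^esub> inv\<^bsub>B\<^esub> b | a b. a \<in> carrier B \<and> b \<in> carrier B} = {\<one>\<^bsub>B\<^esub>}"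
    proof
      show "{a \<otimes>\<^bsub>B\<^esub> b \<otimes>\<^bsub>B\<^esub> inv\<^bsub>B\<^esub> a \<otimes>\<^bsub>B\<^esub> inv\<^bsub>B\<^esub> b | a b. a \<in> carrier B \<and> b \<in> carrier B} \<subseteq> {\<one>\<^bsub>B\<^esub>}"
      proof
        fix z assume "z \<in> {a \<otimes>\<^bsub>B\<^esub> b \<otimes>\<^bsub>B\<^esub> inv\<^bsub>B\<^esub> a \<otimes>\<^bsub>B\<^esub> inv\<^bsub>B\<^esub> b | a b. a \<in> carrier B \<and> b \<in> carrier B}"
        then obtain a b where ab: "a \<in> carrier B" "b \<in> carrier B" "z = a \<otimes>\<^bsub>B\<^esub> b \<otimes>\<^bsub>B\<^esub> inv\<^bsub>B\<^esub> a \<otimes>\<^bsub>B\<^esub> inv\<^bsub>B\<^esub> b" by blast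
        have "z = a \<otimes>\<^bsub>B\<^esub> (inv\<^bsub>B\<^esub> a \<otimes>\<^bsub>B\<^esub> (b \<otimes>\<^bsub>B\<^esub> inv\<^bsub>B\<^esub> b))"
          using ab B.m_lcomm[of b "inv\<^bsub>B\<^esub> a" "inv\<^bsub>B\<^esub> b"] by (simp add: B.m_assoc)
        also have "\<dots> = \<one>\<^bsub>B\<^esub>" using ab by simp
        finally show "z \<in> {\<one>\<^bsub>B\<^esub>}" by simp
      qed
      show "{\<one>\<^bsub>B\<^esub>} \<subseteq> {a \<otimes>\<^bsub>B\<^esub> b \<otimes>\<^bsub>B\<^esub> inv\<^bsub>B\<^esub> a \<otimes>\<^bsub>B\<^esub> inv\<^bsub>B\<^esub> b | a b. a \<in> carrier B \<and> b \<in> carrier B}"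
      proof -
        have "\<one>\<^bsub>B\<^esub> = \<one>\<^bsub>B\<^esub> \<otimes>\<^bsub>B\<^esub> \<one>\<^bsub>B\<^esub> \<otimes>\<^bsub>B\<^esub> inv\<^bsub>B\<^esub> \<one>\<^bsub>B\<^esub> \<otimes>\<^bsub>B\<^esub> inv\<^bsub>B\<^esub> \<one>\<^bsub>B\<^esub>" by simp
        then show ?thesis by blast
      qed
    qed
    then show ?thesis by (simp add: comm_subgroup_def B.generate_one)
  qed
  then have "nilpotent_group B" unfolding nilpotent_group_def using B.is_group by blast
  then have "in_class F B" using cn finB B.is_group unfolding contains_nilpotent_def by blast
  moreover have "A \<cong> B" using iso unfolding is_iso_def by blast
  ultimately show ?thesis using in_class_iso by blast
qed


context group begin

lemma transfer:
  assumes her: "hereditary_formation F"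
    and G0: "subgroup G0 G" and H: "subgroup H G"
    and W: "nrm G G0 W" and Y: "nrm G G0 Y" and YX: "Y \<subseteq> W"
    and A: "nrm G H A" and B: "nrm G H B" and BA: "B \<subseteq> A"
    and c1: "Y \<inter> W \<inter> A \<subseteq> B"
    and c2: "A \<subseteq> (W \<inter> A) <#> B"
    and c3: "H \<subseteq> cent G H A B <#> (G0 \<inter> H)"
    and inS: "in_class F (semidirect_factor (G\<lparr>carrier:=G0\<rparr>) W Y)"
  shows "in_class F (semidirect_factor (G\<lparr>carrier:=H\<rparr>) A B)"
proof -
  let ?S = "semidirect_factor (G\<lparr>carrier:=G0\<rparr>) W Y"
  let ?T = "semidirect_factor (G\<lparr>carrier:=H\<rparr>) A B"
  let ?C0 = "cent G G0 W Y"
  let ?CH = "cent G H A B"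
  have cG: "\<And>h. h \<in> G0 \<Longrightarrow> h \<in> carrier G" using subgroup.mem_carrier[OF G0] by auto
  have cH: "\<And>h. h \<in> H \<Longrightarrow> h \<in> carrier G" using subgroup.mem_carrier[OF H] by auto
  have cW: "\<And>h. h \<in> W \<Longrightarrow> h \<in> carrier G" using nrm_carr[OF W] by auto
  have cA: "\<And>h. h \<in> A \<Longrightarrow> h \<in> carrier G" using nrm_carr[OF A] by auto
  have cB: "\<And>h. h \<in> B \<Longrightarrow> h \<in> carrier G" using nrm_carr[OF B] by auto
  have AH: "A \<subseteq> H" using nrm_sub[OF A] .
  have XG0: "W \<subseteq> G0" using nrm_sub[OF W] .
  have C0n: "nrm G G0 ?C0" using cent_nrm[OF G0 W Y] .
  have CHn: "nrm G H ?CH" using cent_nrm[OF H A B] .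
  define U where "U = {(Y #> x, ?C0 #> g) | x g. x \<in> W \<inter> A \<and> g \<in> G0 \<inter> H}"
  define f where "f = (\<lambda>(P, Q). (B #> (SOME x. x \<in> P \<inter> W \<inter> A), ?CH #> (SOME g. g \<in> Q \<inter> G0 \<inter> H)))"
  have key: "f (Y #> x, ?C0 #> g) = (B #> x, ?CH #> g)" if x: "x \<in> W \<inter> A" and g: "g \<in> G0 \<inter> H" for x g
  proof -
    define x' where "x' = (SOME x'. x' \<in> (Y #> x) \<inter> W \<inter> A)"
    define g' where "g' = (SOME g'. g' \<in> (?C0 #> g) \<inter> G0 \<inter> H)"
    have "x \<in> (Y #> x) \<inter> W \<inter> A" using x rcos_self[OF nrm_sg[OF Y]] cW by auto
    then have x': "x' \<in> (Y #> x) \<inter> W \<inter> A" unfolding x'_def by (rule someI)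
    have "g \<in> (?C0 #> g) \<inter> G0 \<inter> H" using g rcos_self[OF nrm_sg[OF C0n]] cG by auto
    then have g': "g' \<in> (?C0 #> g) \<inter> G0 \<inter> H" unfolding g'_def by (rule someI)
    have e1: "B #> x' = B #> x"
    proof -
      have "x' \<in> Y #> x" using x' by blast
      then obtain y where y: "y \<in> Y" "x' = y \<otimes> x" unfolding r_coset_mem by blast
      have "y = x' \<otimes> inv x" using y cW x nrm_carr[OF Y] by (simp add: m_assoc)
      moreover have "x' \<otimes> inv x \<in> W \<inter> A" using x x' nrm_m nrm_inv W A by auto
      ultimately have "x' \<otimes> inv x \<in> B" using c1 y(1) by auto
      then show ?thesis using rcos_eq[OF nrm_sg[OF B]] x x' cW by auto
    qed
    have e2: "?CH #> g' = ?CH #> g"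
    proof -
      have "g' \<in> ?C0 #> g" using g' by blast
      then obtain c where c: "c \<in> ?C0" "g' = c \<otimes> g" unfolding r_coset_mem by blast
      have cc: "c \<in> carrier G" using c nrm_carr[OF C0n] by auto
      have ce: "c = g' \<otimes> inv g" using c cc g cG by (simp add: m_assoc)
      have gg: "g \<in> G0" "g \<in> H" "g' \<in> G0" "g' \<in> H" using g g' by auto
      have cG0H: "c \<in> G0" "c \<in> H" unfolding ce
        using subgroup.m_closed[OF G0 gg(3) subgroup.m_inv_closed[OF G0 gg(1)]]
          subgroup.m_closed[OF H gg(4) subgroup.m_inv_closed[OF H gg(2)]] by auto
      have "c \<in> ?CH" unfolding cent_mem
      proof (intro conjI ballI)
        show "c \<in> H" by (rule cG0H(2))
        fix a assume a: "a \<in> A"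
        then have "a \<in> (W \<inter> A) <#> B" using c2 by blast
        then obtain x1 b where xb: "x1 \<in> W \<inter> A" "b \<in> B" "a = x1 \<otimes> b" unfolding set_mult_mem by blast
        have k1: "c \<otimes> x1 \<otimes> inv c \<otimes> inv x1 \<in> Y" using c xb unfolding cent_mem by auto
        have k2: "c \<otimes> x1 \<otimes> inv c \<otimes> inv x1 \<in> W"
          using nrm_m[OF W nrm_conj[OF W cG0H(1)] nrm_inv[OF W]] xb by auto
        have k3: "c \<otimes> x1 \<otimes> inv c \<otimes> inv x1 \<in> A"
          using nrm_m[OF A nrm_conj[OF A cG0H(2)] nrm_inv[OF A]] xb by auto
        have k: "c \<otimes> x1 \<otimes> inv c \<otimes> inv x1 \<in> B" using k1 k2 k3 c1 by auto
        have kb: "c \<otimes> b \<otimes> inv c \<otimes> inv b \<in> B" using nrm_m[OF B nrm_conj[OF B cG0H(2) xb(2)] nrm_inv[OF B xb(2)]] .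
        have x1H: "x1 \<in> H" using xb AH by auto
        have kb': "x1 \<otimes> (c \<otimes> b \<otimes> inv c \<otimes> inv b) \<otimes> inv x1 \<in> B" using nrm_conj[OF B x1H kb] .
        have "c \<otimes> a \<otimes> inv c \<otimes> inv a = (c \<otimes> x1 \<otimes> inv c \<otimes> inv x1) \<otimes> (x1 \<otimes> (c \<otimes> b \<otimes> inv c \<otimes> inv b) \<otimes> inv x1)"
          using xb cc cW cB by (simp add: m_assoc inv_mult_group)
        then show "c \<otimes> a \<otimes> inv c \<otimes> inv a \<in> B" using nrm_m[OF B k kb'] by simp
      qed
      then have "g' \<otimes> inv g \<in> ?CH" using ce by simp
      then show ?thesis using rcos_eq[OF nrm_sg[OF CHn]] g g' cG by auto
    qed
    show ?thesis unfolding f_def using e1 e2 x'_def g'_def by simp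
  qed
  have mulS: "(Y #> x, ?C0 #> g) \<otimes>\<^bsub>?S\<^esub> (Y #> x', ?C0 #> g') = (Y #> (x \<otimes> (g \<otimes> x' \<otimes> inv g)), ?C0 #> (g \<otimes> g'))"
    if "x \<in> W" "x' \<in> W" "g \<in> G0" "g' \<in> G0" for x x' g g'
    using sdf_mult[OF G0 W Y YX that] .
  have mulT: "(B #> x, ?CH #> g) \<otimes>\<^bsub>?T\<^esub> (B #> x', ?CH #> g') = (B #> (x \<otimes> (g \<otimes> x' \<otimes> inv g)), ?CH #> (g \<otimes> g'))"
    if "x \<in> A" "x' \<in> A" "g \<in> H" "g' \<in> H" for x x' g g'
    using sdf_mult[OF H A B BA that] .
  have clo: "x \<otimes> (g \<otimes> x' \<otimes> inv g) \<in> W \<inter> A" if "x \<in> W \<inter> A" "x' \<in> W \<inter> A" "g \<in> G0 \<inter> H" for x x' g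
    using that nrm_m[OF W] nrm_m[OF A] nrm_conj[OF W] nrm_conj[OF A] by auto
  have cloG: "g \<otimes> g' \<in> G0 \<inter> H" if "g \<in> G0 \<inter> H" "g' \<in> G0 \<inter> H" for g g'
    using that subgroup.m_closed[OF G0] subgroup.m_closed[OF H] by auto
  have one1: "\<one> \<in> W \<inter> A" "\<one> \<in> G0 \<inter> H" using nrm_one[OF W] nrm_one[OF A] subgroup.one_closed[OF G0] subgroup.one_closed[OF H] by auto
  have oneS: "\<one>\<^bsub>?S\<^esub> = (Y #> \<one>, ?C0 #> \<one>)"
    using sdf_one[OF G0 W] rcos_one[OF nrm_sg[OF Y]] rcos_one[OF nrm_sg[OF C0n]] by simp
  show ?thesis
  proof (rule sub_hom[OF her inS, of U f])
    show "U \<subseteq> carrier ?S" unfolding U_def sdf_carrier[OF G0 W] by blast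
    show "\<one>\<^bsub>?S\<^esub> \<in> U" unfolding oneS U_def using one1 by blast
    show "\<one>\<^bsub>?S\<^esub> \<otimes>\<^bsub>?S\<^esub> \<one>\<^bsub>?S\<^esub> = \<one>\<^bsub>?S\<^esub>" unfolding oneS using mulS one1 by simp
    show "u \<otimes>\<^bsub>?S\<^esub> v \<in> U" if uvU: "u \<in> U" "v \<in> U" for u v
    proof -
      obtain x g x' g' where "x \<in> W \<inter> A" "g \<in> G0 \<inter> H" "x' \<in> W \<inter> A" "g' \<in> G0 \<inter> H"
        "u = (Y #> x, ?C0 #> g)" "v = (Y #> x', ?C0 #> g')" using uvU unfolding U_def by blast
      then have "u \<otimes>\<^bsub>?S\<^esub> v = (Y #> (x \<otimes> (g \<otimes> x' \<otimes> inv g)), ?C0 #> (g \<otimes> g'))"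
        "x \<otimes> (g \<otimes> x' \<otimes> inv g) \<in> W \<inter> A" "g \<otimes> g' \<in> G0 \<inter> H" using mulS clo cloG by auto
      then show ?thesis unfolding U_def by blast
    qed
    show "\<exists>v\<in>U. u \<otimes>\<^bsub>?S\<^esub> v = \<one>\<^bsub>?S\<^esub>" if uvU: "u \<in> U" for u
    proof -
      obtain x g where xg: "x \<in> W \<inter> A" "g \<in> G0 \<inter> H" "u = (Y #> x, ?C0 #> g)" using uvU unfolding U_def by blast
      have cxg: "x \<in> carrier G" "g \<in> carrier G" using xg cW cG by auto
      let ?x' = "inv g \<otimes> inv x \<otimes> g"
      have x': "?x' \<in> W \<inter> A" using xg nrm_conj'[OF G0 W] nrm_conj'[OF H A] nrm_inv[OF W] nrm_inv[OF A] by auto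
      have g': "inv g \<in> G0 \<inter> H" using xg subgroup.m_inv_closed[OF G0] subgroup.m_inv_closed[OF H] by auto
      have "u \<otimes>\<^bsub>?S\<^esub> (Y #> ?x', ?C0 #> inv g) = (Y #> (x \<otimes> (g \<otimes> ?x' \<otimes> inv g)), ?C0 #> (g \<otimes> inv g))"
        using mulS xg x' g' by auto
      also have "\<dots> = \<one>\<^bsub>?S\<^esub>" unfolding oneS using cxg by (simp add: m_assoc)
      finally show ?thesis using x' g' unfolding U_def by blast
    qed
    show "f ` U = carrier ?T"
    proof
      show "f ` U \<subseteq> carrier ?T" unfolding sdf_carrier[OF H A] U_def using key by auto
      show "carrier ?T \<subseteq> f ` U"
      proof
        fix t assume "t \<in> carrier ?T"
        then obtain a h where ah: "a \<in> A" "h \<in> H" "t = (B #> a, ?CH #> h)" unfolding sdf_carrier[OF H A] by blast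
        have "a \<in> (W \<inter> A) <#> B" using c2 ah by blast
        then obtain x1 b where xb: "x1 \<in> W \<inter> A" "b \<in> B" "a = x1 \<otimes> b" unfolding set_mult_mem by blast
        have "h \<in> ?CH <#> (G0 \<inter> H)" using c3 ah by blast
        then obtain c g0 where cg: "c \<in> ?CH" "g0 \<in> G0 \<inter> H" "h = c \<otimes> g0" unfolding set_mult_mem by blast
        have x1H: "x1 \<in> H" using xb AH by auto
        have "a \<otimes> inv x1 = x1 \<otimes> b \<otimes> inv x1" using xb cW cB by (simp add: m_assoc)
        then have "a \<otimes> inv x1 \<in> B" using nrm_conj[OF B x1H xb(2)] by simp
        then have e1: "B #> a = B #> x1" using rcos_eq[OF nrm_sg[OF B]] ah xb cA cW by auto
        have cc: "c \<in> carrier G" using cg nrm_carr[OF CHn] by auto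
        have "h \<otimes> inv g0 = c" using cg cc cG by (simp add: m_assoc)
        then have e2: "?CH #> h = ?CH #> g0" using rcos_eq[OF nrm_sg[OF CHn]] ah cg cH cG by auto
        have "t = f (Y #> x1, ?C0 #> g0)" using key[OF xb(1) cg(2)] e1 e2 ah by simp
        moreover have "(Y #> x1, ?C0 #> g0) \<in> U" unfolding U_def using xb cg by blast
        ultimately show "t \<in> f ` U" by blast
      qed
    qed
    show "f (u \<otimes>\<^bsub>?S\<^esub> v) = f u \<otimes>\<^bsub>?T\<^esub> f v" if uvU: "u \<in> U" "v \<in> U" for u v
    proof -
      obtain x g x' g' where xg: "x \<in> W \<inter> A" "g \<in> G0 \<inter> H" "x' \<in> W \<inter> A" "g' \<in> G0 \<inter> H"
        "u = (Y #> x, ?C0 #> g)" "v = (Y #> x', ?C0 #> g')" using uvU unfolding U_def by blast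
      have "f (u \<otimes>\<^bsub>?S\<^esub> v) = f (Y #> (x \<otimes> (g \<otimes> x' \<otimes> inv g)), ?C0 #> (g \<otimes> g'))" using mulS xg by auto
      also have "\<dots> = (B #> (x \<otimes> (g \<otimes> x' \<otimes> inv g)), ?CH #> (g \<otimes> g'))" using key clo cloG xg by auto
      also have "\<dots> = (B #> x, ?CH #> g) \<otimes>\<^bsub>?T\<^esub> (B #> x', ?CH #> g')" using mulT xg by auto
      also have "\<dots> = f u \<otimes>\<^bsub>?T\<^esub> f v" using key xg by auto
      finally show ?thesis .
    qed
  qed
qed

end


definition hyp :: "(nat monoid \<Rightarrow> bool) \<Rightarrow> ('a,'b) monoid_scheme \<Rightarrow> 'a set \<Rightarrow> 'a set \<Rightarrow> bool" where
 "hyp F G H N \<longleftrightarrow> nrm G H N \<and>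
    (\<forall>A B. cf G H A B \<and> A \<subseteq> N \<longrightarrow> in_class F (semidirect_factor (G\<lparr>carrier:=H\<rparr>) A B))"

context group begin

lemma hyp_iff: "subgroup H G \<Longrightarrow> F_hypercentral F (G\<lparr>carrier:=H\<rparr>) N \<longleftrightarrow> hyp F G H N"
  unfolding F_hypercentral_def hyp_def F_central_def by (simp add: nrm_iff cf_iff)

lemma hc_eq: "subgroup H G \<Longrightarrow> F_hypercenter F (G\<lparr>carrier:=H\<rparr>) = (GREATEST N. hyp F G H N)"
proof -
  assume H: "subgroup H G"
  have "F_hypercentral F (G\<lparr>carrier:=H\<rparr>) = hyp F G H" by (rule ext) (simp add: hyp_iff[OF H])
  then show ?thesis unfolding F_hypercenter_def by simp
qed

lemma mult_sup_left: assumes "A \<subseteq> carrier G" "\<one> \<in> N" shows "A \<subseteq> A <#> N"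
proof
  fix x assume "x \<in> A"
  moreover have "x = x \<otimes> \<one>" using \<open>x \<in> A\<close> assms(1) by auto
  ultimately show "x \<in> A <#> N" using assms(2) unfolding set_mult_mem by blast
qed

lemma nrm_sup_left: "nrm G H A \<Longrightarrow> nrm G H N \<Longrightarrow> A \<subseteq> A <#> N"
  using mult_sup_left nrm_carr nrm_one by (metis subsetI)

lemma nrm_sup_right: "nrm G H A \<Longrightarrow> nrm G H N \<Longrightarrow> N \<subseteq> A <#> N"
  using sg_mult_one_left nrm_carr nrm_sg by (metis subsetI)

lemma cf_nrm: "cf G H A B \<Longrightarrow> nrm G H A" "cf G H A B \<Longrightarrow> nrm G H B" "cf G H A B \<Longrightarrow> B \<subseteq> A"
  "cf G H A B \<Longrightarrow> B \<noteq> A"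
  unfolding cf_def by auto

lemma cf_min: "cf G H A B \<Longrightarrow> nrm G H M \<Longrightarrow> B \<subseteq> M \<Longrightarrow> M \<subseteq> A \<Longrightarrow> M = B \<or> M = A"
  unfolding cf_def by blast

lemma cf_not_triv: assumes "cf G H A B" "A \<subseteq> {\<one>}" shows False
proof -
  have "\<one> \<in> B" using nrm_one[OF cf_nrm(2)[OF assms(1)]] .
  then have "A \<subseteq> B" using assms(2) by auto
  then show False using cf_nrm(3,4)[OF assms(1)] by blast
qed

lemma one_in_cent: "subgroup H G \<Longrightarrow> nrm G H A \<Longrightarrow> nrm G H B \<Longrightarrow> \<one> \<in> cent G H A B"
  using nrm_one[OF cent_nrm] by blast

lemma c3_triv:
  assumes H: "subgroup H G" "subgroup K G" "K \<subseteq> H" and A: "nrm G K A" and B: "nrm G K B"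
  shows "K \<subseteq> cent G K A B <#> (H \<inter> K)"
proof
  fix k assume k: "k \<in> K"
  then have "k = \<one> \<otimes> k" using subgroup.mem_carrier[OF H(2)] by simp
  moreover have "k \<in> H \<inter> K" using k H(3) by auto
  ultimately show "k \<in> cent G K A B <#> (H \<inter> K)" using one_in_cent[OF H(2) A B] unfolding set_mult_mem by blast
qed

lemma dedA:
  assumes H: "subgroup H G" and cf: "cf G H A B" and N: "nrm G H N" and nsub: "\<not> (A \<inter> N \<subseteq> B)"
  shows "cf G H (A \<inter> N) (B \<inter> N)" "A = (A \<inter> N) <#> B"
proof -
  have A: "nrm G H A" and B: "nrm G H B" and BA: "B \<subseteq> A" using cf_nrm[OF cf] by auto
  have AN: "nrm G H (A \<inter> N)" using nrm_Int[OF A N] .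
  have BN: "nrm G H (B \<inter> N)" using nrm_Int[OF B N] .
  have M: "nrm G H ((A \<inter> N) <#> B)" using nrm_mult[OF H AN B] .
  have BM: "B \<subseteq> (A \<inter> N) <#> B" using nrm_sup_right[OF AN B] .
  have MA: "(A \<inter> N) <#> B \<subseteq> A" using sg_mult_sub[OF nrm_sg[OF A]] BA by blast
  have ANM: "A \<inter> N \<subseteq> (A \<inter> N) <#> B"
    using nrm_sup_left[OF AN B] by simp
  have "(A \<inter> N) <#> B \<noteq> B" using ANM nsub by blast
  then show eqA: "A = (A \<inter> N) <#> B" using cf_min[OF cf M BM MA] by auto
  show "cf G H (A \<inter> N) (B \<inter> N)" unfolding cf_def
  proof (intro conjI allI impI)
    show "nrm G H (A \<inter> N)" "nrm G H (B \<inter> N)" using AN BN by auto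
    show "B \<inter> N \<subset> A \<inter> N" using BA nsub by blast
    fix L assume L: "nrm G H L \<and> B \<inter> N \<subseteq> L \<and> L \<subseteq> A \<inter> N"
    have Ln: "nrm G H L" and L1: "B \<inter> N \<subseteq> L" and L2: "L \<subseteq> A \<inter> N" using L by auto
    have LB: "nrm G H (L <#> B)" using nrm_mult[OF H Ln B] .
    have BLB: "B \<subseteq> L <#> B" using nrm_sup_right[OF Ln B] .
    have LA: "L \<subseteq> A" using L2 by blast
    have LBA: "L <#> B \<subseteq> A" using sg_mult_sub[OF nrm_sg[OF A] LA BA] .
    have "L <#> B = B \<or> L <#> B = A" using cf_min[OF cf LB BLB LBA] .
    then show "L = B \<inter> N \<or> L = A \<inter> N"
    proof
      assume e: "L <#> B = B"
      have "L \<subseteq> L <#> B" using nrm_sup_left[OF Ln B] .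
      then have "L \<subseteq> B \<inter> N" using e L by blast
      then show ?thesis using L by blast
    next
      assume e: "L <#> B = A"
      have "A \<inter> N = N \<inter> (L <#> B)" using e by blast
      also have "\<dots> = L <#> (N \<inter> B)" using dedekind1[OF nrm_sg[OF N] nrm_sg[OF Ln] nrm_sg[OF B]] L2 by blast
      also have "\<dots> = L"
      proof -
        have "N \<inter> B \<subseteq> L" "\<one> \<in> N \<inter> B" using L1 nrm_one[OF BN] by auto
        then show ?thesis using sg_mult_absorb[OF nrm_sg[OF Ln]] by blast
      qed
      finally show ?thesis by blast
    qed
  qed
qed

lemma dedB:
  assumes H: "subgroup H G" and cf: "cf G H A B" and N: "nrm G H N" and sub: "A \<inter> N \<subseteq> B"
  shows "cf G H (A <#> N) (B <#> N)"
proof -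
  have A: "nrm G H A" and B: "nrm G H B" and BA: "B \<subseteq> A" using cf_nrm[OF cf] by auto
  have AN: "nrm G H (A <#> N)" using nrm_mult[OF H A N] .
  have BN: "nrm G H (B <#> N)" using nrm_mult[OF H B N] .
  have inter: "A \<inter> (B <#> N) = B" 
  proof -
    have "A \<inter> (B <#> N) = B <#> (A \<inter> N)" using dedekind1[OF nrm_sg[OF A] nrm_sg[OF B] nrm_sg[OF N] BA] .
    also have "\<dots> = B" using sg_mult_absorb[OF nrm_sg[OF B] sub] nrm_one[OF A] nrm_one[OF N] by blast
    finally show ?thesis .
  qed
  show ?thesis unfolding cf_def
  proof (intro conjI allI impI)
    show "nrm G H (A <#> N)" "nrm G H (B <#> N)" using AN BN by auto
    have "B <#> N \<subseteq> A <#> N" using BA by (simp add: mono_set_mult)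
    moreover have "B <#> N \<noteq> A <#> N"
    proof
      assume e: "B <#> N = A <#> N"
      have "A \<subseteq> A <#> N" using nrm_sup_left[OF A N] by simp
      then have "A \<subseteq> A \<inter> (B <#> N)" using e by blast
      then have "A \<subseteq> B" using inter by blast
      then show False using cf_nrm(3,4)[OF cf] by blast
    qed
    ultimately show "B <#> N \<subset> A <#> N" by blast
    fix M assume M: "nrm G H M \<and> B <#> N \<subseteq> M \<and> M \<subseteq> A <#> N"
    have Mn: "nrm G H M" and M1: "B <#> N \<subseteq> M" and M2: "M \<subseteq> A <#> N" using M by auto
    have NM: "N \<subseteq> M" using nrm_sup_right[OF B N] M1 by blast
    have BM: "B \<subseteq> M \<inter> A"
    proof -
      have "B \<subseteq> B <#> N" using nrm_sup_left[OF B N] by simp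
      then show ?thesis using M BA by blast
    qed
    have "M \<inter> A = B \<or> M \<inter> A = A" using cf_min[OF cf nrm_Int[OF Mn A] BM] by blast
    then show "M = B <#> N \<or> M = A <#> N"
    proof
      assume e: "M \<inter> A = B"
      have "M = M \<inter> (A <#> N)" using M2 by blast
      also have "\<dots> = (M \<inter> A) <#> N" using dedekind2[OF nrm_sg[OF Mn] nrm_sg[OF A] nrm_sg[OF N] NM] .
      finally show ?thesis using e by blast
    next
      assume e: "M \<inter> A = A"
      then have "A \<subseteq> M" by blast
      then have "A <#> N \<subseteq> M" using sg_mult_sub[OF nrm_sg[OF Mn] _ NM] by blast
      then show ?thesis using M2 by blast
    qed
  qed
qed

lemma case1:
  assumes her: "hereditary_formation F" and H: "subgroup H G" and hN: "hyp F G H N"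
    and cf: "cf G H A B" and nsub: "\<not> (A \<inter> N \<subseteq> B)"
  shows "in_class F (semidirect_factor (G\<lparr>carrier:=H\<rparr>) A B)"
proof -
  have A: "nrm G H A" and B: "nrm G H B" and BA: "B \<subseteq> A" using cf_nrm[OF cf] by auto
  have N: "nrm G H N" using hN unfolding hyp_def by blast
  note d = dedA[OF H cf N nsub]
  have inS: "in_class F (semidirect_factor (G\<lparr>carrier:=H\<rparr>) (A \<inter> N) (B \<inter> N))"
    using hN d(1) unfolding hyp_def by blast
  show ?thesis
  proof (rule transfer[OF her H H nrm_Int[OF A N] nrm_Int[OF B N] _ A B BA _ _ _ inS])
    show "B \<inter> N \<subseteq> A \<inter> N" using BA by blast
    show "B \<inter> N \<inter> (A \<inter> N) \<inter> A \<subseteq> B" by blast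
    have e: "A \<inter> N \<inter> A = A \<inter> N" by blast
    show "A \<subseteq> (A \<inter> N \<inter> A) <#> B" unfolding e using d(2) by simp
    show "H \<subseteq> cent G H A B <#> (H \<inter> H)" using c3_triv[OF H H subset_refl A B] .
  qed
qed

lemma HC:
  assumes her: "hereditary_formation F" and H: "subgroup H G" and hZ: "hyp F G H Z"
    and T: "nrm G H T" and ZT: "Z \<subseteq> T"
    and up: "\<And>A B. cf G H A B \<Longrightarrow> Z \<subseteq> B \<Longrightarrow> A \<subseteq> T \<Longrightarrow> in_class F (semidirect_factor (G\<lparr>carrier:=H\<rparr>) A B)"
  shows "hyp F G H T"
  unfolding hyp_def
proof (intro conjI allI impI)
  show "nrm G H T" by (rule T)
  fix A B assume AB: "cf G H A B \<and> A \<subseteq> T"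
  then have cf: "cf G H A B" and AT: "A \<subseteq> T" by auto
  have A: "nrm G H A" and B: "nrm G H B" and BA: "B \<subseteq> A" using cf_nrm[OF cf] by auto
  have Z: "nrm G H Z" using hZ unfolding hyp_def by blast
  show "in_class F (semidirect_factor (G\<lparr>carrier:=H\<rparr>) A B)"
  proof (cases "A \<inter> Z \<subseteq> B")
    case False
    then show ?thesis using case1[OF her H hZ cf] by blast
  next
    case True
    have cf2: "cf G H (A <#> Z) (B <#> Z)" using dedB[OF H cf Z True] .
    have ZB: "Z \<subseteq> B <#> Z" using nrm_sup_right[OF B Z] .
    have AZT: "A <#> Z \<subseteq> T" using sg_mult_sub[OF nrm_sg[OF T] AT ZT] .
    have inS: "in_class F (semidirect_factor (G\<lparr>carrier:=H\<rparr>) (A <#> Z) (B <#> Z))" using up[OF cf2 ZB AZT] .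
    have AAZ: "A \<subseteq> A <#> Z" using nrm_sup_left[OF A Z] by simp
    show ?thesis
    proof (rule transfer[OF her H H nrm_mult[OF H A Z] nrm_mult[OF H B Z] _ A B BA _ _ _ inS])
      show "B <#> Z \<subseteq> A <#> Z" using BA by (simp add: mono_set_mult)
      have "A \<inter> (B <#> Z) = B <#> (A \<inter> Z)" using dedekind1[OF nrm_sg[OF A] nrm_sg[OF B] nrm_sg[OF Z] BA] .
      also have "\<dots> = B" using sg_mult_absorb[OF nrm_sg[OF B] True] nrm_one[OF A] nrm_one[OF Z] by blast
      finally show "(B <#> Z) \<inter> (A <#> Z) \<inter> A \<subseteq> B" by blast
      have "A \<subseteq> A <#> B" using sg_mult_absorb[OF nrm_sg[OF A] BA nrm_one[OF B]] by simp
      moreover have e: "(A <#> Z) \<inter> A = A" using AAZ by blast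
      ultimately show "A \<subseteq> ((A <#> Z) \<inter> A) <#> B" unfolding e by blast
      show "H \<subseteq> cent G H A B <#> (H \<inter> H)" using c3_triv[OF H H subset_refl A B] .
    qed
  qed
qed

lemma hyp_triv: "subgroup H G \<Longrightarrow> hyp F G H {\<one>}"
  unfolding hyp_def using nrm_triv cf_not_triv by blast

lemma hyp_mult:
  assumes her: "hereditary_formation F" and H: "subgroup H G" and h1: "hyp F G H N1" and h2: "hyp F G H N2"
  shows "hyp F G H (N1 <#> N2)"
proof -
  have N1: "nrm G H N1" and N2: "nrm G H N2" using h1 h2 unfolding hyp_def by auto
  have N12: "N1 \<subseteq> N1 <#> N2" using nrm_sup_left[OF N1 N2] by simp
  show ?thesis
  proof (rule HC[OF her H h1 nrm_mult[OF H N1 N2] N12])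
    fix A B assume cf: "cf G H A B" and N1B: "N1 \<subseteq> B" and AT: "A \<subseteq> N1 <#> N2"
    have A: "nrm G H A" and B: "nrm G H B" and BA: "B \<subseteq> A" using cf_nrm[OF cf] by auto
    have "\<not> (A \<inter> N2 \<subseteq> B)"
    proof
      assume s: "A \<inter> N2 \<subseteq> B"
      have "A = A \<inter> (N1 <#> N2)" using AT by blast
      also have "\<dots> = N1 <#> (A \<inter> N2)" using dedekind1[OF nrm_sg[OF A] nrm_sg[OF N1] nrm_sg[OF N2]] N1B BA by blast
      also have "\<dots> \<subseteq> B" using sg_mult_sub[OF nrm_sg[OF B] N1B s] .
      finally show False using cf_nrm(3,4)[OF cf] by blast
    qed
    then show "in_class F (semidirect_factor (G\<lparr>carrier:=H\<rparr>) A B)" using case1[OF her H h2 cf] by blast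
  qed
qed

lemma hyp_greatest:
  assumes her: "hereditary_formation F" and H: "subgroup H G" and fin: "finite (carrier G)"
  shows "hyp F G H (GREATEST N. hyp F G H N)" "\<And>M. hyp F G H M \<Longrightarrow> M \<subseteq> (GREATEST N. hyp F G H N)"
proof -
  let ?S = "{N. hyp F G H N}"
  have "?S \<subseteq> Pow (carrier G)"
  proof
    fix N assume "N \<in> ?S"
    then have "nrm G H N" unfolding hyp_def by simp
    then show "N \<in> Pow (carrier G)" using nrm_carr by blast
  qed
  moreover have "finite (Pow (carrier G))" using fin by simp
  ultimately have fS: "finite ?S" by (rule finite_subset)
  have "?S \<noteq> {}" using hyp_triv[OF H] by blast
  then obtain N where N: "N \<in> ?S" and mx: "\<And>M. M \<in> ?S \<Longrightarrow> N \<subseteq> M \<Longrightarrow> N = M"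
    using finite_has_maximal[OF fS] by blast
  have gr: "M \<subseteq> N" if "hyp F G H M" for M
  proof -
    have hNM: "hyp F G H (N <#> M)" using hyp_mult[OF her H _ that] N by blast
    have NN: "nrm G H N" "nrm G H M" using N that unfolding hyp_def by auto
    have "N \<subseteq> N <#> M" using nrm_sup_left[OF NN(1) NN(2)] .
    then have "N = N <#> M" using mx hNM by blast
    moreover have "M \<subseteq> N <#> M" using sg_mult_one_left[OF nrm_sg[OF NN(1)]] nrm_carr[OF NN(2)] by blast
    ultimately show ?thesis by blast
  qed
  have e: "(GREATEST N. hyp F G H N) = N" by (rule Greatest_equality) (use N gr in auto)
  show "hyp F G H (GREATEST N. hyp F G H N)" using e N by simp
  show "\<And>M. hyp F G H M \<Longrightarrow> M \<subseteq> (GREATEST N. hyp F G H N)" using e gr by simp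
qed

end


context group begin

lemma central_fc:
  assumes form: "formation F" and cn: "contains_nilpotent F" and fin: "finite (carrier G)"
    and H: "subgroup H G" and cf: "cf G H A B"
    and cen: "\<And>x h. x \<in> A \<Longrightarrow> h \<in> H \<Longrightarrow> x \<otimes> h \<otimes> inv x \<otimes> inv h \<in> B"
  shows "in_class F (semidirect_factor (G\<lparr>carrier:=H\<rparr>) A B)"
proof -
  have A: "nrm G H A" and B: "nrm G H B" and BA: "B \<subseteq> A" using cf_nrm[OF cf] by auto
  have AH: "A \<subseteq> H" using nrm_sub[OF A] .
  have cH: "\<And>h. h \<in> H \<Longrightarrow> h \<in> carrier G" using subgroup.mem_carrier[OF H] by auto
  have cA: "\<And>h. h \<in> A \<Longrightarrow> h \<in> carrier G" using nrm_carr[OF A] by auto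
  have cB: "\<And>h. h \<in> B \<Longrightarrow> h \<in> carrier G" using nrm_carr[OF B] by auto
  have centH: "cent G H A B = H"
  proof
    show "cent G H A B \<subseteq> H" unfolding cent_def by auto
    show "H \<subseteq> cent G H A B"
    proof
      fix h assume h: "h \<in> H"
      have "\<forall>a\<in>A. h \<otimes> a \<otimes> inv h \<otimes> inv a \<in> B"
      proof
        fix a assume a: "a \<in> A"
        have "h \<otimes> a \<otimes> inv h \<otimes> inv a = inv (a \<otimes> h \<otimes> inv a \<otimes> inv h)"
          using cH[OF h] cA[OF a] by (simp add: inv_mult_group m_assoc)
        then show "h \<otimes> a \<otimes> inv h \<otimes> inv a \<in> B" using nrm_inv[OF B cen[OF a h]] by simp
      qed
      then show "h \<in> cent G H A B" using h unfolding cent_mem by auto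
    qed
  qed
  have Hc: "H #> h = H" if "h \<in> H" for h using subgroup.rcos_const[OF H is_group that] .
  have carT: "carrier (semidirect_factor (G\<lparr>carrier:=H\<rparr>) A B) = {B #> a | a. a \<in> A} \<times> {H}"
    unfolding sdf_carrier[OF H A] centH using Hc subgroup.one_closed[OF H] by blast
  have sA: "subgroup A G" using nrm_sg[OF A] .
  have nBA: "nrm G A B" unfolding nrm_def using nrm_sg[OF B] BA nrm_conj[OF B] AH by blast
  have nB: "B \<lhd> G\<lparr>carrier:=A\<rparr>" using nrm_iff[OF sA] nBA by simp
  interpret N: normal B "G\<lparr>carrier:=A\<rparr>" by (rule nB)
  let ?Q = "G\<lparr>carrier:=A\<rparr> Mod B"
  have carQ: "carrier ?Q = {B #> a | a. a \<in> A}" unfolding FactGroup_def RCOSETS_def by auto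
  have mulQ: "(B #> a) \<otimes>\<^bsub>?Q\<^esub> (B #> a') = B #> (a \<otimes> a')" if "a \<in> A" "a' \<in> A" for a a'
    using rcos_mult_nrm[OF sA nBA that] by simp
  have cQ: "comm_group ?Q"
  proof (rule group.group_comm_groupI[OF N.factorgroup_is_group])
    fix P P' assume "P \<in> carrier ?Q" "P' \<in> carrier ?Q"
    then obtain a a' where aa: "a \<in> A" "a' \<in> A" "P = B #> a" "P' = B #> a'" unfolding carQ by blast
    have "a \<otimes> a' \<otimes> inv (a' \<otimes> a) = a \<otimes> a' \<otimes> inv a \<otimes> inv a'"
      using aa cA by (simp add: inv_mult_group m_assoc)
    also have "\<dots> \<in> B" using cen aa AH by blast
    finally have "B #> (a \<otimes> a') = B #> (a' \<otimes> a)"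
      using rcos_eq[OF nrm_sg[OF B]] aa cA by simp
    then show "P \<otimes>\<^bsub>?Q\<^esub> P' = P' \<otimes>\<^bsub>?Q\<^esub> P" using mulQ aa by simp
  qed
  have finQ: "finite (carrier ?Q)"
  proof -
    have "finite A" using fin cA by (meson finite_subset subsetI)
    then show ?thesis unfolding carQ by simp
  qed
  have inQ: "in_class F ?Q" using abelian_in_class[OF cn cQ finQ] .
  show ?thesis
  proof (rule hom_img[OF form inQ N.factorgroup_is_group, of "\<lambda>P. (P, H)"])
    show "(\<lambda>P. (P, H)) ` carrier ?Q = carrier (semidirect_factor (G\<lparr>carrier:=H\<rparr>) A B)"
      unfolding carT carQ by blast
    fix P P' assume "P \<in> carrier ?Q" "P' \<in> carrier ?Q"
    then obtain a a' where aa: "a \<in> A" "a' \<in> A" "P = B #> a" "P' = B #> a'" unfolding carQ by blast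
    have one: "\<one> \<in> H" using subgroup.one_closed[OF H] .
    have "(B #> a, H) \<otimes>\<^bsub>semidirect_factor (G\<lparr>carrier:=H\<rparr>) A B\<^esub> (B #> a', H)
        = (B #> a, cent G H A B #> \<one>) \<otimes>\<^bsub>semidirect_factor (G\<lparr>carrier:=H\<rparr>) A B\<^esub> (B #> a', cent G H A B #> \<one>)"
      using Hc[OF one] centH by simp
    also have "\<dots> = (B #> (a \<otimes> (\<one> \<otimes> a' \<otimes> inv \<one>)), cent G H A B #> (\<one> \<otimes> \<one>))"
      using sdf_mult[OF H A B BA aa(1,2) one one] .
    also have "\<dots> = (B #> (a \<otimes> a'), H)" using Hc[OF one] centH aa cA by simp
    finally show "(P \<otimes>\<^bsub>?Q\<^esub> P', H) = (P, H) \<otimes>\<^bsub>semidirect_factor (G\<lparr>carrier:=H\<rparr>) A B\<^esub> (P', H)"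
      using mulQ aa by simp
  qed
qed

lemma central_absorb:
  assumes her: "hereditary_formation F" and cn: "contains_nilpotent F" and fin: "finite (carrier G)"
    and H: "subgroup H G" and hZ: "hyp F G H Z" and grt: "\<And>M. hyp F G H M \<Longrightarrow> M \<subseteq> Z"
    and T: "nrm G H T" and ZT: "Z \<subseteq> T"
    and cen: "\<And>t h. t \<in> T \<Longrightarrow> h \<in> H \<Longrightarrow> t \<otimes> h \<otimes> inv t \<otimes> inv h \<in> Z"
  shows "T \<subseteq> Z"
proof -
  have form: "formation F" using her unfolding hereditary_formation_def by blast
  have "hyp F G H T"
  proof (rule HC[OF her H hZ T ZT])
    fix A B assume cf: "cf G H A B" and ZB: "Z \<subseteq> B" and AT: "A \<subseteq> T"
    show "in_class F (semidirect_factor (G\<lparr>carrier:=H\<rparr>) A B)"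
    proof (rule central_fc[OF form cn fin H cf])
      fix x h assume "x \<in> A" "h \<in> H"
      then show "x \<otimes> h \<otimes> inv x \<otimes> inv h \<in> B" using cen AT ZB by blast
    qed
  qed
  then show ?thesis using grt by blast
qed

lemma hyp_restrict:
  assumes her: "hereditary_formation F" and fin: "finite (carrier G)"
    and H: "subgroup H G" and K: "subgroup K G" and KH: "K \<subseteq> H"
  shows "hyp F G H N \<Longrightarrow> hyp F G K (N \<inter> K)"
proof (induction "card N" arbitrary: N rule: less_induct)
  case less
  have hN: "hyp F G H N" by (rule less.prems)
  have nN: "nrm G H N" using hN unfolding hyp_def by blast
  have nNK: "nrm G K (N \<inter> K)" unfolding nrm_def
  proof (intro conjI ballI)
    show "subgroup (N \<inter> K) G" using subgroups_Inter_pair[OF nrm_sg[OF nN] K] .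
    show "N \<inter> K \<subseteq> K" by blast
    fix k x assume k: "k \<in> K" and x: "x \<in> N \<inter> K"
    have "k \<in> H" using k KH by blast
    then have "k \<otimes> x \<otimes> inv k \<in> N" using nrm_conj[OF nN] x by blast
    moreover have "k \<otimes> x \<otimes> inv k \<in> K" using k x subgroup.m_closed[OF K] subgroup.m_inv_closed[OF K] by blast
    ultimately show "k \<otimes> x \<otimes> inv k \<in> N \<inter> K" by blast
  qed
  show ?case unfolding hyp_def
  proof (intro conjI allI impI)
    show "nrm G K (N \<inter> K)" by (rule nNK)
    fix A B assume AB: "cf G K A B \<and> A \<subseteq> N \<inter> K"
    then have cf: "cf G K A B" and AN: "A \<subseteq> N \<inter> K" by auto
    have A: "nrm G K A" and B: "nrm G K B" and BA: "B \<subseteq> A" using cf_nrm[OF cf] by auto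
    have AK: "A \<subseteq> K" using nrm_sub[OF A] .
    show "in_class F (semidirect_factor (G\<lparr>carrier:=K\<rparr>) A B)"
    proof (cases "N \<subseteq> {\<one>}")
      case True
      then show ?thesis using cf_not_triv[OF cf] AN by blast
    next
      case False
      let ?S = "{L. nrm G H L \<and> L \<subset> N}"
      have "?S \<subseteq> Pow (carrier G)" using nrm_carr by blast
      moreover have "finite (Pow (carrier G))" using fin by simp
      ultimately have fS: "finite ?S" by (rule finite_subset)
      have "{\<one>} \<in> ?S" using nrm_triv[OF H] nrm_one[OF nN] False by blast
      then have "?S \<noteq> {}" by blast
      then obtain L where L: "L \<in> ?S" and mx0: "\<forall>M\<in>?S. L \<le> M \<longrightarrow> L = M"
        using finite_has_maximal[OF fS] by meson
      have mx: "\<And>M. M \<in> ?S \<Longrightarrow> L \<subseteq> M \<Longrightarrow> L = M" using mx0 by blast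
      have nL: "nrm G H L" and LN: "L \<subset> N" using L by auto
      have cfNL: "cf G H N L" unfolding cf_def
      proof (intro conjI allI impI)
        show "nrm G H N" "nrm G H L" "L \<subset> N" using nN nL LN by auto
        fix M assume M: "nrm G H M \<and> L \<subseteq> M \<and> M \<subseteq> N"
        show "M = L \<or> M = N"
        proof (cases "M = N")
          case False
          then have "M \<in> ?S" using M by blast
          then show ?thesis using mx M by blast
        qed simp
      qed
      have hL: "hyp F G H L" unfolding hyp_def using nL hN LN unfolding hyp_def by blast
      have finN: "finite N" using fin nrm_carr[OF nN] by (meson finite_subset subsetI)
      have "card L < card N" using psubset_card_mono[OF finN LN] .
      then have IH: "hyp F G K (L \<inter> K)" using less.hyps hL by blast
      show ?thesis
      proof (cases "A \<inter> (L \<inter> K) \<subseteq> B")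
        case False
        then show ?thesis using case1[OF her K IH cf] by blast
      next
        case True
        have inS: "in_class F (semidirect_factor (G\<lparr>carrier:=H\<rparr>) N L)" using hN cfNL unfolding hyp_def by blast
        show ?thesis
        proof (rule transfer[OF her H K nN nL _ A B BA _ _ _ inS])
          show "L \<subseteq> N" using LN by blast
          show "L \<inter> N \<inter> A \<subseteq> B" using True AK by blast
          have e: "N \<inter> A = A" using AN by blast
          show "A \<subseteq> (N \<inter> A) <#> B" unfolding e using nrm_sup_left[OF A B] .
          show "K \<subseteq> cent G K A B <#> (H \<inter> K)" using c3_triv[OF H K KH A B] .
        qed
      qed
    qed
  qed
qed

end


definition elist :: "('a,'b) monoid_scheme \<Rightarrow> 'a list \<Rightarrow> 'a" where
  "elist M xs = foldr (\<lambda>x p. x \<otimes>\<^bsub>M\<^esub> p) xs \<one>\<^bsub>M\<^esub>"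

lemma elist_Nil [simp]: "elist M [] = \<one>\<^bsub>M\<^esub>" unfolding elist_def by simp
lemma elist_Cons [simp]: "elist M (x # xs) = x \<otimes>\<^bsub>M\<^esub> elist M xs" unfolding elist_def by simp

lemma spl_Nil [simp]: "set_prod_list M [] = {\<one>\<^bsub>M\<^esub>}" unfolding set_prod_list_def by simp
lemma spl_Cons [simp]: "set_prod_list M (A # As) = A <#>\<^bsub>M\<^esub> set_prod_list M As" unfolding set_prod_list_def by simp

lemma set_mult_memI: "a \<in> A \<Longrightarrow> b \<in> B \<Longrightarrow> a \<otimes>\<^bsub>M\<^esub> b \<in> A <#>\<^bsub>M\<^esub> B"
  unfolding set_mult_def by blast

context group begin

lemma elist_closed: "set xs \<subseteq> carrier G \<Longrightarrow> elist G xs \<in> carrier G"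
  by (induction xs) auto

lemma prod_one: "(\<forall>A\<in>set As. \<one> \<in> A) \<Longrightarrow> \<one> \<in> set_prod_list G As"
proof (induction As)
  case (Cons A As)
  have p: "\<one> \<in> set_prod_list G As" using Cons.IH Cons.prems by simp
  have a: "\<one> \<in> A" using Cons.prems by simp
  have "\<one> \<otimes> \<one> \<in> A <#> set_prod_list G As" by (rule set_mult_memI[OF a p])
  then show ?case by simp
qed simp

lemma prod_carrier: "(\<forall>A\<in>set As. A \<subseteq> carrier G) \<Longrightarrow> set_prod_list G As \<subseteq> carrier G"
proof (induction As)
  case (Cons A As)
  then show ?case using setmult_subset_G by simp
qed simp

lemma sub_prod: "(\<forall>A\<in>set As. \<one> \<in> A \<and> A \<subseteq> carrier G) \<Longrightarrow> A0 \<in> set As \<Longrightarrow> A0 \<subseteq> set_prod_list G As"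
proof (induction As)
  case (Cons A As)
  have one: "\<one> \<in> set_prod_list G As" using prod_one Cons.prems(1) by auto
  show ?case
  proof (cases "A0 = A")
    case True
    show ?thesis
    proof
      fix a assume "a \<in> A0"
      then have "a = a \<otimes> \<one>" "a \<in> A" using True Cons.prems(1) by auto
      then show "a \<in> set_prod_list G (A # As)" using one unfolding spl_Cons set_mult_mem by blast
    qed
  next
    case False
    then have sub: "A0 \<subseteq> set_prod_list G As" using Cons by auto
    have pc: "set_prod_list G As \<subseteq> carrier G" using prod_carrier Cons.prems(1) by auto
    show ?thesis
    proof
      fix a assume "a \<in> A0"
      then have "a = \<one> \<otimes> a" "a \<in> set_prod_list G As" using sub pc by auto
      then show "a \<in> set_prod_list G (A # As)" using Cons.prems(1) unfolding spl_Cons set_mult_mem by auto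
    qed
  qed
qed simp

lemma prod_closed:
  assumes "\<one> \<in> S" "\<And>x y. x \<in> S \<Longrightarrow> y \<in> S \<Longrightarrow> x \<otimes> y \<in> S"
  shows "(\<forall>A\<in>set As. A \<subseteq> S) \<Longrightarrow> set_prod_list G As \<subseteq> S"
proof (induction As)
  case (Cons A As)
  then have P: "set_prod_list G As \<subseteq> S" and A: "A \<subseteq> S" by auto
  show ?case unfolding spl_Cons
  proof
    fix z assume "z \<in> A <#> set_prod_list G As"
    then obtain a b where "a \<in> A" "b \<in> set_prod_list G As" "z = a \<otimes> b" unfolding set_mult_mem by blast
    then show "z \<in> S" using assms(2) P A by blast
  qed
qed (use assms in simp)

lemma prod_decomp:
  assumes "\<And>k. k \<in> set l \<Longrightarrow> Gs k \<subseteq> carrier G"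
  shows "distinct l \<Longrightarrow> w \<in> set_prod_list G (map Gs l) \<Longrightarrow> \<exists>r. (\<forall>k\<in>set l. r k \<in> Gs k) \<and> w = elist G (map r l)"
  using assms
proof (induction l arbitrary: w)
  case Nil
  then show ?case by simp
next
  case (Cons k l)
  from Cons.prems(2) obtain a p where ap: "a \<in> Gs k" "p \<in> set_prod_list G (map Gs l)" "w = a \<otimes> p"
    unfolding list.map spl_Cons set_mult_mem by blast
  obtain r where r: "\<forall>j\<in>set l. r j \<in> Gs j" "p = elist G (map r l)" using Cons ap by auto
  define r' where "r' = r(k := a)"
  have kl: "k \<notin> set l" using Cons.prems(1) by simp
  have m: "map r' l = map r l" unfolding r'_def using kl by (induction l) auto
  have "elist G (map r' (k # l)) = a \<otimes> elist G (map r l)"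
    by (simp only: list.map elist_Cons m) (simp add: r'_def)
  then have "w = elist G (map r' (k # l))" using ap r by simp
  moreover have "\<forall>j\<in>set (k # l). r' j \<in> Gs j" using r ap unfolding r'_def by auto
  ultimately show ?case by blast
qed

lemma elist_in_prod:
  "(\<forall>k\<in>set l. r k \<in> Gs k) \<Longrightarrow> elist G (map r l) \<in> set_prod_list G (map Gs l)"
proof (induction l)
  case (Cons k l)
  then show ?case unfolding list.map spl_Cons elist_Cons set_mult_mem by auto
qed simp

lemma elist_in_set:
  assumes "\<one> \<in> S" "\<And>x y. x \<in> S \<Longrightarrow> y \<in> S \<Longrightarrow> x \<otimes> y \<in> S"
  shows "(\<forall>x\<in>set xs. x \<in> S) \<Longrightarrow> elist G xs \<in> S"
  by (induction xs) (use assms in auto)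

lemma comm_elist:
  assumes x: "x \<in> carrier G"
  shows "(\<forall>y\<in>set ys. y \<in> carrier G \<and> x \<otimes> y = y \<otimes> x) \<Longrightarrow> x \<otimes> elist G ys = elist G ys \<otimes> x"
proof (induction ys)
  case (Cons y ys)
  have y: "y \<in> carrier G" "x \<otimes> y = y \<otimes> x" using Cons.prems by auto
  have ys: "set ys \<subseteq> carrier G" using Cons.prems by auto
  have e: "x \<otimes> elist G ys = elist G ys \<otimes> x" using Cons by auto
  have "x \<otimes> elist G (y # ys) = (x \<otimes> y) \<otimes> elist G ys" using x y(1) elist_closed[OF ys] by (simp add: m_assoc)
  also have "\<dots> = (y \<otimes> x) \<otimes> elist G ys" using y(2) by simp
  also have "\<dots> = y \<otimes> (x \<otimes> elist G ys)" using x y(1) elist_closed[OF ys] by (simp add: m_assoc)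
  also have "\<dots> = y \<otimes> (elist G ys \<otimes> x)" using e by simp
  also have "\<dots> = elist G (y # ys) \<otimes> x" using x y(1) elist_closed[OF ys] by (simp add: m_assoc)
  finally show ?case .
qed (use x in simp)

lemma elist_mult_comm:
  assumes "distinct l" "\<And>k. k \<in> set l \<Longrightarrow> a k \<in> carrier G" "\<And>k. k \<in> set l \<Longrightarrow> b k \<in> carrier G"
    "\<And>j k. j \<in> set l \<Longrightarrow> k \<in> set l \<Longrightarrow> j \<noteq> k \<Longrightarrow> b j \<otimes> a k = a k \<otimes> b j"
  shows "elist G (map (\<lambda>k. a k \<otimes> b k) l) = elist G (map a l) \<otimes> elist G (map b l)"
  using assms
proof (induction l)
  case (Cons k l)
  have ca: "set (map a l) \<subseteq> carrier G" and cb: "set (map b l) \<subseteq> carrier G" using Cons.prems by auto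
  have ak: "a k \<in> carrier G" "b k \<in> carrier G" using Cons.prems by auto
  have IH: "elist G (map (\<lambda>k. a k \<otimes> b k) l) = elist G (map a l) \<otimes> elist G (map b l)"
    using Cons by auto
  have bc: "b k \<otimes> elist G (map a l) = elist G (map a l) \<otimes> b k"
  proof (rule comm_elist[OF ak(2)])
    show "\<forall>y\<in>set (map a l). y \<in> carrier G \<and> b k \<otimes> y = y \<otimes> b k"
      using Cons.prems by auto
  qed
  have "elist G (map (\<lambda>k. a k \<otimes> b k) (k # l)) = a k \<otimes> (b k \<otimes> elist G (map a l)) \<otimes> elist G (map b l)"
    using IH ak elist_closed[OF ca] elist_closed[OF cb] by (simp add: m_assoc)
  also have "\<dots> = a k \<otimes> (elist G (map a l) \<otimes> b k) \<otimes> elist G (map b l)" using bc by simp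
  also have "\<dots> = elist G (map a (k # l)) \<otimes> elist G (map b (k # l))"
    using ak elist_closed[OF ca] elist_closed[OF cb] by (simp add: m_assoc)
  finally show ?case .
qed simp

lemma elist_extract:
  assumes "\<And>k. k \<in> set l \<Longrightarrow> a k \<in> carrier G"
    "\<And>j. j \<in> set l \<Longrightarrow> j \<noteq> i \<Longrightarrow> a i \<otimes> a j = a j \<otimes> a i"
  shows "distinct l \<Longrightarrow> i \<in> set l \<Longrightarrow> elist G (map a l) = a i \<otimes> elist G (map a (filter (\<lambda>j. j \<noteq> i) l))"
  using assms
proof (induction l)
  case (Cons k l)
  show ?case
  proof (cases "k = i")
    case True
    then have "i \<notin> set l" using Cons.prems(1) by simp
    then have "filter (\<lambda>j. j \<noteq> i) l = l" by (intro filter_True) auto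
    then show ?thesis using True by simp
  next
    case False
    then have il: "i \<in> set l" using Cons.prems(2) by simp
    have c: "set (map a (filter (\<lambda>j. j \<noteq> i) l)) \<subseteq> carrier G" using Cons.prems by auto
    have ai: "a i \<in> carrier G" "a k \<in> carrier G" using Cons.prems il by auto
    have IH: "elist G (map a l) = a i \<otimes> elist G (map a (filter (\<lambda>j. j \<noteq> i) l))" using Cons il by auto
    have "elist G (map a (k # l)) = (a k \<otimes> a i) \<otimes> elist G (map a (filter (\<lambda>j. j \<noteq> i) l))"
      using IH ai elist_closed[OF c] by (simp add: m_assoc)
    also have "\<dots> = (a i \<otimes> a k) \<otimes> elist G (map a (filter (\<lambda>j. j \<noteq> i) l))" using Cons.prems(4)[of k] False by simp
    also have "\<dots> = a i \<otimes> elist G (map a (filter (\<lambda>j. j \<noteq> i) (k # l)))"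
      using False ai elist_closed[OF c] by (simp add: m_assoc)
    finally show ?thesis .
  qed
qed simp

end

lemma (in group_hom) elist_hom: "set xs \<subseteq> carrier G \<Longrightarrow> h (elist G xs) = elist H (map h xs)"
proof (induction xs)
  case (Cons x xs)
  then show ?case using G.elist_closed by simp
qed simp


lemma (in group) nrm_Int_restrict:
  assumes "subgroup K G" "K \<subseteq> H" "nrm G H A" "nrm G K N"
  shows "nrm G K (A \<inter> N)"
  unfolding nrm_def
proof (intro conjI ballI)
  show "subgroup (A \<inter> N) G" using subgroups_Inter_pair[OF nrm_sg[OF assms(3)] nrm_sg[OF assms(4)]] .
  show "A \<inter> N \<subseteq> K" using nrm_sub[OF assms(4)] by blast
  fix k x assume k: "k \<in> K" and x: "x \<in> A \<inter> N"
  have "k \<in> H" using k assms(2) by blast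
  then show "k \<otimes> x \<otimes> inv k \<in> A \<inter> N" using nrm_conj[OF assms(3)] nrm_conj[OF assms(4) k] x by blast
qed

locale setting = group G for G (structure) +
  fixes F :: "nat monoid \<Rightarrow> bool" and Gs :: "nat \<Rightarrow> 'a set" and n :: nat
  assumes her: "hereditary_formation F" and cn: "contains_nilpotent F" and fin: "finite (carrier G)"
    and sgs: "\<And>i. i < n \<Longrightarrow> subgroup (Gs i) G"
    and prodG: "carrier G = set_prod_list G (map Gs [0..<n])"
    and commh: "\<And>i. i < n \<Longrightarrow> comm_subgroup G (Gs i) (set_prod_list G (map Gs (filter (\<lambda>j. j \<noteq> i) [0..<n])))
                 \<subseteq> F_hypercenter F G"
begin

definition ZZ where "ZZ = (GREATEST N. hyp F G (carrier G) N)"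
definition Zs where "Zs i = (GREATEST N. hyp F G (Gs i) N)"
definition PP where "PP i = set_prod_list G (map Gs (filter (\<lambda>j. j \<noteq> i) [0..<n]))"
definition qm where "qm = (\<lambda>x. ZZ #> x)"
abbreviation "QQ \<equiv> G Mod ZZ"

lemma GG: "G\<lparr>carrier := carrier G\<rparr> = G" by simp

lemma ZZ_eq: "F_hypercenter F G = ZZ"
  using hc_eq[OF subgroup_self, of F] unfolding ZZ_def GG by simp

lemma Zs_eq: "i < n \<Longrightarrow> F_hypercenter F (G\<lparr>carrier := Gs i\<rparr>) = Zs i"
  using hc_eq[OF sgs] unfolding Zs_def by simp

lemma hZ: "hyp F G (carrier G) ZZ" and grZ: "hyp F G (carrier G) M \<Longrightarrow> M \<subseteq> ZZ"
  using hyp_greatest[OF her subgroup_self fin] unfolding ZZ_def by auto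

lemma hZs: "i < n \<Longrightarrow> hyp F G (Gs i) (Zs i)"
  using hyp_greatest[OF her sgs fin] unfolding Zs_def by auto

lemma grZs: "i < n \<Longrightarrow> hyp F G (Gs i) M \<Longrightarrow> M \<subseteq> Zs i"
  using hyp_greatest[OF her sgs fin] unfolding Zs_def by auto

lemma nZ: "nrm G (carrier G) ZZ" using hZ unfolding hyp_def by blast

lemma nZs: "i < n \<Longrightarrow> nrm G (Gs i) (Zs i)" using hZs unfolding hyp_def by blast

lemma normZ: "ZZ \<lhd> G"
  using nrm_iff[OF subgroup_self] nZ GG by metis

lemma Gs_carr: "i < n \<Longrightarrow> Gs i \<subseteq> carrier G" using sgs subgroup.subset by blast

lemma all_sets: "\<forall>A\<in>set (map Gs [0..<n]). \<one> \<in> A \<and> A \<subseteq> carrier G"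
  by (auto simp: subgroup.one_closed[OF sgs] Gs_carr)

lemma all_sets': "\<forall>A\<in>set (map Gs (filter (\<lambda>j. j \<noteq> i) [0..<n])). \<one> \<in> A \<and> A \<subseteq> carrier G"
  using all_sets by auto

lemma Gs_sub_PP: "i < n \<Longrightarrow> j < n \<Longrightarrow> j \<noteq> i \<Longrightarrow> Gs j \<subseteq> PP i"
  unfolding PP_def by (rule sub_prod[OF all_sets']) auto

lemma commZ: "i < n \<Longrightarrow> a \<in> Gs i \<Longrightarrow> b \<in> PP i \<Longrightarrow> a \<otimes> b \<otimes> inv a \<otimes> inv b \<in> ZZ"
proof -
  assume i: "i < n" and a: "a \<in> Gs i" and b: "b \<in> PP i"
  have "a \<otimes> b \<otimes> inv a \<otimes> inv b \<in> comm_subgroup G (Gs i) (PP i)"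
    unfolding comm_subgroup_def using a b by (intro generate.incl) blast
  then show ?thesis using commh[OF i] ZZ_eq unfolding PP_def by auto
qed

lemma commZ2: "i < n \<Longrightarrow> j < n \<Longrightarrow> i \<noteq> j \<Longrightarrow> a \<in> Gs i \<Longrightarrow> b \<in> Gs j \<Longrightarrow> a \<otimes> b \<otimes> inv a \<otimes> inv b \<in> ZZ"
  using commZ Gs_sub_PP by blast

interpretation QZ: normal ZZ G by (rule normZ)

lemma Qgrp: "group QQ" using QZ.factorgroup_is_group .

lemma pi_hom: "group_hom G QQ qm"
  unfolding group_hom_def group_hom_axioms_def qm_def
  using QZ.r_coset_hom_Mod Qgrp is_group by simp

interpretation PH: group_hom G QQ qm by (rule pi_hom)

lemma pi_mult: "x \<in> carrier G \<Longrightarrow> y \<in> carrier G \<Longrightarrow> qm (x \<otimes> y) = qm x \<otimes>\<^bsub>QQ\<^esub> qm y"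
  using PH.hom_mult by simp

lemma pi_inv: "x \<in> carrier G \<Longrightarrow> qm (inv x) = inv\<^bsub>QQ\<^esub> qm x"
  using PH.hom_inv by simp

lemma pi_carr: "x \<in> carrier G \<Longrightarrow> qm x \<in> carrier QQ"
  using PH.hom_closed by simp

lemma pi_one_iff: "x \<in> carrier G \<Longrightarrow> qm x = \<one>\<^bsub>QQ\<^esub> \<longleftrightarrow> x \<in> ZZ"
proof -
  assume x: "x \<in> carrier G"
  have "qm x = \<one>\<^bsub>QQ\<^esub> \<longleftrightarrow> ZZ #> x = ZZ #> \<one>" unfolding qm_def using rcos_one[OF QZ.subgroup_axioms] by simp
  also have "\<dots> \<longleftrightarrow> x \<in> ZZ" using rcos_eq[OF QZ.subgroup_axioms x one_closed] x by simp
  finally show ?thesis .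
qed

lemma pi_eq_iff: "x \<in> carrier G \<Longrightarrow> y \<in> carrier G \<Longrightarrow> qm x = qm y \<longleftrightarrow> x \<otimes> inv y \<in> ZZ"
  unfolding qm_def using rcos_eq[OF QZ.subgroup_axioms] by simp

lemma pi_comm:
  assumes "a \<in> carrier G" "b \<in> carrier G" "a \<otimes> b \<otimes> inv a \<otimes> inv b \<in> ZZ"
  shows "qm a \<otimes>\<^bsub>QQ\<^esub> qm b = qm b \<otimes>\<^bsub>QQ\<^esub> qm a"
proof -
  have "(a \<otimes> b) \<otimes> inv (b \<otimes> a) = a \<otimes> b \<otimes> inv a \<otimes> inv b" using assms by (simp add: inv_mult_group m_assoc)
  then have "qm (a \<otimes> b) = qm (b \<otimes> a)" using pi_eq_iff[of "a \<otimes> b" "b \<otimes> a"] assms by simp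
  then show ?thesis using pi_mult assms by simp
qed

lemma pi_comm2: "i < n \<Longrightarrow> j < n \<Longrightarrow> i \<noteq> j \<Longrightarrow> a \<in> Gs i \<Longrightarrow> b \<in> Gs j \<Longrightarrow> qm a \<otimes>\<^bsub>QQ\<^esub> qm b = qm b \<otimes>\<^bsub>QQ\<^esub> qm a"
  using pi_comm commZ2 Gs_carr by blast

lemma pi_Z: "z \<in> ZZ \<Longrightarrow> qm z = \<one>\<^bsub>QQ\<^esub>"
  using pi_one_iff nrm_carr[OF nZ] by blast

lemma in_Z_by_pi: "x \<in> carrier G \<Longrightarrow> qm x = \<one>\<^bsub>QQ\<^esub> \<Longrightarrow> x \<in> ZZ"
  using pi_one_iff by blast

lemma prod_all: "\<one> \<in> S \<Longrightarrow> (\<And>x y. x \<in> S \<Longrightarrow> y \<in> S \<Longrightarrow> x \<otimes> y \<in> S) \<Longrightarrow> (\<And>j. j < n \<Longrightarrow> Gs j \<subseteq> S) \<Longrightarrow> carrier G \<subseteq> S"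
  using prod_closed[of S "map Gs [0..<n]"] prodG by auto

end


lemma (in group) comm_conj:
  assumes "x \<in> carrier G" "y \<in> carrier G" "x \<otimes> y = y \<otimes> x"
  shows "x \<otimes> y \<otimes> inv x = y"
proof -
  have "x \<otimes> y \<otimes> inv x = (y \<otimes> x) \<otimes> inv x" using assms(3) by simp
  also have "\<dots> = y" using assms(1,2) by (simp add: m_assoc)
  finally show ?thesis .
qed

lemma (in group) comm_comm:
  assumes "x \<in> carrier G" "y \<in> carrier G" "x \<otimes> y = y \<otimes> x"
  shows "x \<otimes> y \<otimes> inv x \<otimes> inv y = \<one>"
  using comm_conj[OF assms] assms by simp

context setting begin

interpretation QZ: normal ZZ G by (rule normZ)
interpretation PH: group_hom G QQ qm by (rule pi_hom)

lemma Gs_Z_sub: "i < n \<Longrightarrow> Gs i \<inter> ZZ \<subseteq> Zs i"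
proof -
  assume i: "i < n"
  have "hyp F G (Gs i) (ZZ \<inter> Gs i)" using hyp_restrict[OF her fin subgroup_self sgs[OF i] Gs_carr[OF i]] hZ by blast
  then show ?thesis using grZs[OF i] by blast
qed

lemma qm_conj: "g \<in> carrier G \<Longrightarrow> t \<in> carrier G \<Longrightarrow> qm (g \<otimes> t \<otimes> inv g) = qm g \<otimes>\<^bsub>QQ\<^esub> qm t \<otimes>\<^bsub>QQ\<^esub> inv\<^bsub>QQ\<^esub> qm g"
  using pi_mult pi_inv by simp

lemma qm_comm4: "g \<in> carrier G \<Longrightarrow> a \<in> carrier G \<Longrightarrow>
   qm (g \<otimes> a \<otimes> inv g \<otimes> inv a) = qm g \<otimes>\<^bsub>QQ\<^esub> qm a \<otimes>\<^bsub>QQ\<^esub> inv\<^bsub>QQ\<^esub> qm g \<otimes>\<^bsub>QQ\<^esub> inv\<^bsub>QQ\<^esub> qm a"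
  using pi_mult pi_inv by simp

lemma Zs_sub_Z:
  assumes i: "i < n"
  shows "Zs i \<subseteq> ZZ"
proof -
  define Zi where "Zi = Zs i"
  define Gi where "Gi = Gs i"
  define T where "T = Zi <#> ZZ"
  have sGi: "subgroup Gi G" unfolding Gi_def using sgs[OF i] .
  have GiC: "Gi \<subseteq> carrier G" unfolding Gi_def using Gs_carr[OF i] .
  have nZi: "nrm G Gi Zi" unfolding Zi_def Gi_def using nZs[OF i] .
  have sZi: "subgroup Zi G" using nrm_sg[OF nZi] .
  have ZiGi: "Zi \<subseteq> Gi" using nrm_sub[OF nZi] .
  have ZiC: "Zi \<subseteq> carrier G" using ZiGi GiC by blast
  have sZ: "subgroup ZZ G" using nrm_sg[OF nZ] .
  have ZC: "ZZ \<subseteq> carrier G" using nrm_carr[OF nZ] by blast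
  have qmz: "\<And>z. z \<in> ZZ \<Longrightarrow> qm z = \<one>\<^bsub>QQ\<^esub>" using pi_Z .
  have memT: "t \<in> T \<longleftrightarrow> t \<in> carrier G \<and> (\<exists>z\<in>Zi. qm t = qm z)" for t
  proof
    assume "t \<in> T"
    then obtain z w where zw: "z \<in> Zi" "w \<in> ZZ" "t = z \<otimes> w" unfolding T_def set_mult_mem by blast
    have c: "z \<in> carrier G" "w \<in> carrier G" using zw ZiC ZC by auto
    have "qm t = qm z \<otimes>\<^bsub>QQ\<^esub> qm w" using pi_mult c zw by simp
    also have "\<dots> = qm z \<otimes>\<^bsub>QQ\<^esub> \<one>\<^bsub>QQ\<^esub>" using qmz zw by simp
    also have "\<dots> = qm z" using PH.H.r_one pi_carr c by blast
    finally have "qm t = qm z" .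
    then show "t \<in> carrier G \<and> (\<exists>z\<in>Zi. qm t = qm z)" using zw c by auto
  next
    assume "t \<in> carrier G \<and> (\<exists>z\<in>Zi. qm t = qm z)"
    then obtain z where t: "t \<in> carrier G" and z: "z \<in> Zi" "qm t = qm z" by blast
    have zc: "z \<in> carrier G" using z ZiC by auto
    have "t \<otimes> inv z \<in> ZZ" using pi_eq_iff t zc z by simp
    then have w: "inv z \<otimes> (t \<otimes> inv z) \<otimes> z \<in> ZZ" using nrm_conj'[OF subgroup_self nZ] zc by blast
    have "t = z \<otimes> (inv z \<otimes> (t \<otimes> inv z) \<otimes> z)" using t zc by (simp add: m_assoc)
    then show "t \<in> T" using z w unfolding T_def set_mult_mem by blast
  qed
  have TC: "T \<subseteq> carrier G" using memT by blast
  have sT: "subgroup T G" unfolding T_def using sg_mult_nrm[OF subgroup_self sZi ZiC nZ] .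
  have ZT: "ZZ \<subseteq> T" unfolding T_def using sg_mult_one_left[OF sZi ZC] .
  have ZiT: "Zi \<subseteq> T" unfolding T_def using mult_sup_left[OF ZiC nrm_one[OF nZ]] .
  have nT: "nrm G (carrier G) T" unfolding nrm_def
  proof (intro conjI ballI)
    show "subgroup T G" by (rule sT)
    show "T \<subseteq> carrier G" by (rule TC)
    let ?S = "{g \<in> carrier G. \<forall>t\<in>T. g \<otimes> t \<otimes> inv g \<in> T}"
    have "carrier G \<subseteq> ?S"
    proof (rule prod_all)
      show "\<one> \<in> ?S" using TC by auto
      fix x y assume x: "x \<in> ?S" and y: "y \<in> ?S"
      have "\<forall>t\<in>T. x \<otimes> y \<otimes> t \<otimes> inv (x \<otimes> y) \<in> T"
      proof
        fix t assume t: "t \<in> T"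
        have "x \<in> carrier G" "y \<in> carrier G" "t \<in> carrier G" using x y t TC by auto
        then have "x \<otimes> y \<otimes> t \<otimes> inv (x \<otimes> y) = x \<otimes> (y \<otimes> t \<otimes> inv y) \<otimes> inv x"
          by (simp add: m_assoc inv_mult_group)
        then show "x \<otimes> y \<otimes> t \<otimes> inv (x \<otimes> y) \<in> T" using x y t by auto
      qed
      then show "x \<otimes> y \<in> ?S" using x y by auto
    next
      fix j assume j: "j < n"
      show "Gs j \<subseteq> ?S"
      proof
        fix g assume g: "g \<in> Gs j"
        have gc: "g \<in> carrier G" using g Gs_carr[OF j] by auto
        have "g \<otimes> t \<otimes> inv g \<in> T" if t: "t \<in> T" for t
        proof -
          obtain z where tc: "t \<in> carrier G" and z: "z \<in> Zi" "qm t = qm z" using t memT by blast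
          have zc: "z \<in> carrier G" using z ZiC by auto
          have e: "qm (g \<otimes> t \<otimes> inv g) = qm (g \<otimes> z \<otimes> inv g)" using qm_conj gc tc zc z by simp
          show ?thesis
          proof (cases "j = i")
            case True
            then have "g \<otimes> z \<otimes> inv g \<in> Zi" using nrm_conj[OF nZi] g z unfolding Gi_def by blast
            then show ?thesis using e memT gc tc by auto
          next
            case False
            have zGi: "z \<in> Gs i" using z ZiGi unfolding Gi_def by auto
            have cm: "qm g \<otimes>\<^bsub>QQ\<^esub> qm z = qm z \<otimes>\<^bsub>QQ\<^esub> qm g" using pi_comm2[OF j i False g zGi] .
            have "qm (g \<otimes> z \<otimes> inv g) = qm g \<otimes>\<^bsub>QQ\<^esub> qm z \<otimes>\<^bsub>QQ\<^esub> inv\<^bsub>QQ\<^esub> qm g" using qm_conj gc zc by simp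
            also have "\<dots> = qm z" by (rule group.comm_conj[OF Qgrp pi_carr[OF gc] pi_carr[OF zc] cm])
            finally show ?thesis using e memT gc tc z by auto
          qed
        qed
        then show "g \<in> ?S" using gc by auto
      qed
    qed
    then show "\<And>h x. h \<in> carrier G \<Longrightarrow> x \<in> T \<Longrightarrow> h \<otimes> x \<otimes> inv h \<in> T" by blast
  qed
  have hT: "hyp F G (carrier G) T"
  proof (rule HC[OF her subgroup_self hZ nT ZT])
    fix A B assume cf: "cf G (carrier G) A B" and ZB: "ZZ \<subseteq> B" and AT: "A \<subseteq> T"
    have nA: "nrm G (carrier G) A" and nB: "nrm G (carrier G) B" and BA: "B \<subseteq> A" using cf_nrm[OF cf] by auto
    have AC: "A \<subseteq> carrier G" and BC: "B \<subseteq> carrier G" using nrm_carr nA nB by blast+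
    define C where "C = cent G (carrier G) A B"
    have nC: "nrm G (carrier G) C" unfolding C_def using cent_nrm[OF subgroup_self nA nB] .
    have CC: "C \<subseteq> carrier G" using nrm_carr[OF nC] by blast
    have GjC: "Gs j \<subseteq> C" if j: "j < n" "j \<noteq> i" for j
    proof
      fix g assume g: "g \<in> Gs j"
      have gc: "g \<in> carrier G" using g Gs_carr[OF j(1)] by auto
      have "\<forall>a\<in>A. g \<otimes> a \<otimes> inv g \<otimes> inv a \<in> B"
      proof
        fix a assume a: "a \<in> A"
        obtain z where ac: "a \<in> carrier G" and z: "z \<in> Zi" "qm a = qm z" using a AT memT by blast
        have zc: "z \<in> carrier G" using z ZiC by auto
        have zGi: "z \<in> Gs i" using z ZiGi unfolding Gi_def by auto
        have cm: "qm g \<otimes>\<^bsub>QQ\<^esub> qm z = qm z \<otimes>\<^bsub>QQ\<^esub> qm g" using pi_comm2[OF j(1) i j(2) g zGi] .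
        have "qm (g \<otimes> a \<otimes> inv g \<otimes> inv a) = qm g \<otimes>\<^bsub>QQ\<^esub> qm z \<otimes>\<^bsub>QQ\<^esub> inv\<^bsub>QQ\<^esub> qm g \<otimes>\<^bsub>QQ\<^esub> inv\<^bsub>QQ\<^esub> qm z"
          using qm_comm4[OF gc ac] z by simp
        also have "\<dots> = \<one>\<^bsub>QQ\<^esub>" by (rule group.comm_comm[OF Qgrp pi_carr[OF gc] pi_carr[OF zc] cm])
        finally have "g \<otimes> a \<otimes> inv g \<otimes> inv a \<in> ZZ" using in_Z_by_pi gc ac by simp
        then show "g \<otimes> a \<otimes> inv g \<otimes> inv a \<in> B" using ZB by blast
      qed
      then show "g \<in> C" unfolding C_def cent_mem using gc by blast
    qed
    have CG: "carrier G \<subseteq> C <#> Gi"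
    proof (rule prod_all)
      show "\<one> \<in> C <#> Gi" using set_mult_memI[where M=G, OF nrm_one[OF nC] subgroup.one_closed[OF sGi]] by simp
      fix x y assume "x \<in> C <#> Gi" "y \<in> C <#> Gi"
      then obtain c g c' g' where cg: "c \<in> C" "g \<in> Gi" "x = c \<otimes> g" "c' \<in> C" "g' \<in> Gi" "y = c' \<otimes> g'"
        unfolding set_mult_mem by blast
      have cc: "c \<in> carrier G" "g \<in> carrier G" "c' \<in> carrier G" "g' \<in> carrier G" using cg CC GiC by auto
      have "x \<otimes> y = (c \<otimes> (g \<otimes> c' \<otimes> inv g)) \<otimes> (g \<otimes> g')" using cg cc by (simp add: m_assoc)
      moreover have "c \<otimes> (g \<otimes> c' \<otimes> inv g) \<in> C" using nrm_m[OF nC cg(1) nrm_conj[OF nC cc(2) cg(4)]] .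
      moreover have "g \<otimes> g' \<in> Gi" using subgroup.m_closed[OF sGi cg(2) cg(5)] .
      ultimately show "x \<otimes> y \<in> C <#> Gi" using set_mult_memI[where M=G] by metis
    next
      fix j assume j: "j < n"
      show "Gs j \<subseteq> C <#> Gi"
      proof
        fix g assume g: "g \<in> Gs j"
        have gc: "g \<in> carrier G" using g Gs_carr[OF j] by auto
        show "g \<in> C <#> Gi"
        proof (cases "j = i")
          case True
          then have "\<one> \<otimes> g \<in> C <#> Gi" using set_mult_memI[where M=G, OF nrm_one[OF nC]] g unfolding Gi_def by blast
          then show ?thesis using gc by simp
        next
          case False
          then have "g \<otimes> \<one> \<in> C <#> Gi" using set_mult_memI[where M=G, OF _ subgroup.one_closed[OF sGi]] g GjC[OF j] by blast
          then show ?thesis using gc by simp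
        qed
      qed
    qed
    have nW: "nrm G Gi (A \<inter> Zi)" using nrm_Int_restrict[OF sGi GiC nA nZi] .
    have nY: "nrm G Gi (B \<inter> Zi)" using nrm_Int_restrict[OF sGi GiC nB nZi] .
    have ZA: "ZZ \<subseteq> A" using ZB BA by blast
    have AZ: "A = (A \<inter> Zi) <#> ZZ"
    proof -
      have "A = A \<inter> T" using AT by blast
      also have "\<dots> = (A \<inter> Zi) <#> ZZ" unfolding T_def using dedekind2[OF nrm_sg[OF nA] sZi sZ ZA] .
      finally show ?thesis .
    qed
    have cfW: "cf G Gi (A \<inter> Zi) (B \<inter> Zi)" unfolding cf_def
    proof (intro conjI allI impI)
      show "nrm G Gi (A \<inter> Zi)" "nrm G Gi (B \<inter> Zi)" using nW nY by auto
      have "B \<inter> Zi \<noteq> A \<inter> Zi"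
      proof
        assume e: "B \<inter> Zi = A \<inter> Zi"
        have "A = (B \<inter> Zi) <#> ZZ" using AZ e by simp
        also have "\<dots> \<subseteq> B" using sg_mult_sub[OF nrm_sg[OF nB] _ ZB] by blast
        finally show False using cf_nrm(3,4)[OF cf] by blast
      qed
      then show "B \<inter> Zi \<subset> A \<inter> Zi" using BA by blast
      fix M assume M: "nrm G Gi M \<and> B \<inter> Zi \<subseteq> M \<and> M \<subseteq> A \<inter> Zi"
      have nM: "nrm G Gi M" and M1: "B \<inter> Zi \<subseteq> M" and M2: "M \<subseteq> A \<inter> Zi" using M by auto
      have MC: "M \<subseteq> carrier G" using nrm_carr[OF nM] by blast
      have sM: "subgroup M G" using nrm_sg[OF nM] .
      define M' where "M' = M <#> B"
      have sM': "subgroup M' G" unfolding M'_def using sg_mult_nrm[OF subgroup_self sM MC nB] .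
      have nM': "nrm G (carrier G) M'" unfolding nrm_def
      proof (intro conjI ballI)
        show "subgroup M' G" by (rule sM')
        show "M' \<subseteq> carrier G" using subgroup.subset[OF sM'] .
        let ?S = "{g \<in> carrier G. \<forall>x\<in>M'. g \<otimes> x \<otimes> inv g \<in> M'}"
        have M'C: "M' \<subseteq> carrier G" using subgroup.subset[OF sM'] .
        have "carrier G \<subseteq> ?S"
        proof (rule prod_all)
          show "\<one> \<in> ?S" using M'C by auto
          fix x y assume x: "x \<in> ?S" and y: "y \<in> ?S"
          have "\<forall>t\<in>M'. x \<otimes> y \<otimes> t \<otimes> inv (x \<otimes> y) \<in> M'"
          proof
            fix t assume t: "t \<in> M'"
            have "x \<in> carrier G" "y \<in> carrier G" "t \<in> carrier G" using x y t M'C by auto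
            then have "x \<otimes> y \<otimes> t \<otimes> inv (x \<otimes> y) = x \<otimes> (y \<otimes> t \<otimes> inv y) \<otimes> inv x"
              by (simp add: m_assoc inv_mult_group)
            then show "x \<otimes> y \<otimes> t \<otimes> inv (x \<otimes> y) \<in> M'" using x y t by auto
          qed
          then show "x \<otimes> y \<in> ?S" using x y by auto
        next
          fix j assume j: "j < n"
          show "Gs j \<subseteq> ?S"
          proof
            fix g assume g: "g \<in> Gs j"
            have gc: "g \<in> carrier G" using g Gs_carr[OF j] by auto
            have "g \<otimes> x \<otimes> inv g \<in> M'" if x: "x \<in> M'" for x
            proof -
              obtain m b where mb: "m \<in> M" "b \<in> B" "x = m \<otimes> b" using x unfolding M'_def set_mult_mem by blast
              have mc: "m \<in> carrier G" "b \<in> carrier G" using mb MC BC by auto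
              have gb: "g \<otimes> b \<otimes> inv g \<in> B" using nrm_conj[OF nB gc mb(2)] .
              show ?thesis
              proof (cases "j = i")
                case True
                then have gGi: "g \<in> Gi" using g unfolding Gi_def by simp
                have "g \<otimes> x \<otimes> inv g = (g \<otimes> m \<otimes> inv g) \<otimes> (g \<otimes> b \<otimes> inv g)" using mb mc gc by (simp add: m_assoc)
                moreover have "g \<otimes> m \<otimes> inv g \<in> M" using nrm_conj[OF nM gGi mb(1)] .
                ultimately show ?thesis using gb set_mult_memI[where M=G] unfolding M'_def by metis
              next
                case False
                have gC: "g \<in> C" using GjC[OF j False] g by blast
                have mA: "m \<in> A" using mb M2 by blast
                have k: "g \<otimes> m \<otimes> inv g \<otimes> inv m \<in> B" using gC mA unfolding C_def cent_mem by blast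
                have kc: "g \<otimes> m \<otimes> inv g \<otimes> inv m \<in> carrier G" using k BC by blast
                have k': "inv m \<otimes> (g \<otimes> m \<otimes> inv g \<otimes> inv m) \<otimes> m \<in> B" using nrm_conj'[OF subgroup_self nB mc(1) k] .
                have "g \<otimes> x \<otimes> inv g = m \<otimes> ((inv m \<otimes> (g \<otimes> m \<otimes> inv g \<otimes> inv m) \<otimes> m) \<otimes> (g \<otimes> b \<otimes> inv g))"
                  using mb mc gc by (simp add: m_assoc)
                moreover have "(inv m \<otimes> (g \<otimes> m \<otimes> inv g \<otimes> inv m) \<otimes> m) \<otimes> (g \<otimes> b \<otimes> inv g) \<in> B"
                  using nrm_m[OF nB k' gb] .
                ultimately show ?thesis using mb(1) set_mult_memI[where M=G] unfolding M'_def by metis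
              qed
            qed
            then show "g \<in> ?S" using gc by blast
          qed
        qed
        then show "\<And>h x. h \<in> carrier G \<Longrightarrow> x \<in> M' \<Longrightarrow> h \<otimes> x \<otimes> inv h \<in> M'" by blast
      qed
      have BM': "B \<subseteq> M'" unfolding M'_def using sg_mult_one_left[OF sM BC] .
      have MA: "M \<subseteq> A" using M2 by blast
      have M'A: "M' \<subseteq> A" unfolding M'_def using sg_mult_sub[OF nrm_sg[OF nA] MA BA] .
      have "M' = B \<or> M' = A" using cf_min[OF cf nM' BM' M'A] .
      then show "M = B \<inter> Zi \<or> M = A \<inter> Zi"
      proof
        assume e: "M' = B"
        have "M \<subseteq> M'" unfolding M'_def using mult_sup_left[OF MC nrm_one[OF nB]] .
        then have "M \<subseteq> B \<inter> Zi" using e M2 by blast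
        then show ?thesis using M1 by blast
      next
        assume e: "M' = A"
        have MZi: "M \<subseteq> Zi" using M2 by blast
        have "A \<inter> Zi = Zi \<inter> (M <#> B)" using e unfolding M'_def by blast
        also have "\<dots> = M <#> (Zi \<inter> B)" using dedekind1[OF sZi sM nrm_sg[OF nB] MZi] .
        also have "\<dots> = M"
        proof -
          have "Zi \<inter> B \<subseteq> M" "\<one> \<in> Zi \<inter> B" using M1 nrm_one[OF nB] subgroup.one_closed[OF sZi] by auto
          then show ?thesis using sg_mult_absorb[OF sM] by blast
        qed
        finally show ?thesis by blast
      qed
    qed
    have inS: "in_class F (semidirect_factor (G\<lparr>carrier:=Gi\<rparr>) (A \<inter> Zi) (B \<inter> Zi))"
      using hZs[OF i] cfW unfolding hyp_def Gi_def Zi_def by blast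
    show "in_class F (semidirect_factor (G\<lparr>carrier:=carrier G\<rparr>) A B)"
    proof (rule transfer[OF her sGi subgroup_self nW nY _ nA nB BA _ _ _ inS])
      show "B \<inter> Zi \<subseteq> A \<inter> Zi" using BA by blast
      show "B \<inter> Zi \<inter> (A \<inter> Zi) \<inter> A \<subseteq> B" by blast
      have e: "A \<inter> Zi \<inter> A = A \<inter> Zi" by blast
      have "(A \<inter> Zi) <#> ZZ \<subseteq> (A \<inter> Zi) <#> B" using mono_set_mult[where G=G, OF subset_refl ZB] .
      then have "A \<subseteq> (A \<inter> Zi) <#> B" using AZ by simp
      then show "A \<subseteq> (A \<inter> Zi \<inter> A) <#> B" unfolding e .
      have e2: "Gi \<inter> carrier G = Gi" using GiC by blast
      show "carrier G \<subseteq> cent G (carrier G) A B <#> (Gi \<inter> carrier G)" unfolding e2 using CG unfolding C_def .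
    qed
  qed
  have "T \<subseteq> ZZ" using grZ[OF hT] .
  then show ?thesis using ZiT unfolding Zi_def by blast
qed

end


lemma (in group) comm_mult:
  assumes "x \<in> carrier G" "y \<in> carrier G" "z \<in> carrier G" "x \<otimes> y = y \<otimes> x" "x \<otimes> z = z \<otimes> x"
  shows "x \<otimes> (y \<otimes> z) = (y \<otimes> z) \<otimes> x"
proof -
  have "x \<otimes> (y \<otimes> z) = (x \<otimes> y) \<otimes> z" using assms(1-3) by (simp add: m_assoc)
  also have "\<dots> = (y \<otimes> x) \<otimes> z" using assms(4) by simp
  also have "\<dots> = y \<otimes> (x \<otimes> z)" using assms(1-3) by (simp add: m_assoc)
  also have "\<dots> = y \<otimes> (z \<otimes> x)" using assms(5) by simp
  also have "\<dots> = (y \<otimes> z) \<otimes> x" using assms(1-3) by (simp add: m_assoc)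
  finally show ?thesis .
qed

lemma (in group) comm_inv:
  assumes "x \<in> carrier G" "y \<in> carrier G" "x \<otimes> y = y \<otimes> x"
  shows "x \<otimes> inv y = inv y \<otimes> x"
proof -
  have "inv y \<otimes> (x \<otimes> y) \<otimes> inv y = inv y \<otimes> (y \<otimes> x) \<otimes> inv y" using assms(3) by simp
  then show ?thesis using assms(1,2) by (simp add: m_assoc)
qed

context setting begin

interpretation QZ: normal ZZ G by (rule normZ)
interpretation PH: group_hom G QQ qm by (rule pi_hom)

definition Fam where "Fam i = G\<lparr>carrier := Gs i\<rparr> Mod (F_hypercenter F (G\<lparr>carrier := Gs i\<rparr>))"
definition PR where "PR = product_group {..<n} Fam"
definition rep where "rep x k = (SOME g. g \<in> Gs k \<and> x k = Zs k #> g)"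
definition ff where "ff x = qm (elist G (map (rep x) [0..<n]))"

lemma Fam_eq: "i < n \<Longrightarrow> Fam i = G\<lparr>carrier := Gs i\<rparr> Mod Zs i"
  unfolding Fam_def using Zs_eq by simp

lemma Fam_normal: "i < n \<Longrightarrow> Zs i \<lhd> G\<lparr>carrier := Gs i\<rparr>"
  using nrm_iff[OF sgs] nZs by blast

lemma Fam_group: "i < n \<Longrightarrow> group (Fam i)"
  using Fam_eq normal.factorgroup_is_group[OF Fam_normal] by simp

lemma Fam_carrier: "i < n \<Longrightarrow> carrier (Fam i) = {Zs i #> g | g. g \<in> Gs i}"
  unfolding Fam_eq FactGroup_def RCOSETS_def by auto

lemma Fam_mult: "i < n \<Longrightarrow> x \<otimes>\<^bsub>Fam i\<^esub> y = x <#> y"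
  unfolding Fam_eq by simp

lemma Fam_one: "i < n \<Longrightarrow> \<one>\<^bsub>Fam i\<^esub> = Zs i"
  unfolding Fam_eq by simp

lemma PR_group: "group PR" unfolding PR_def by (rule product_group) (simp add: Fam_group)

lemma Zs_coset_mult: "i < n \<Longrightarrow> g \<in> Gs i \<Longrightarrow> h \<in> Gs i \<Longrightarrow> (Zs i #> g) <#> (Zs i #> h) = Zs i #> (g \<otimes> h)"
  using rcos_mult_nrm[OF sgs nZs] by blast

lemma PR_carrier: "x \<in> carrier PR \<longleftrightarrow> x \<in> extensional {..<n} \<and> (\<forall>k<n. \<exists>g\<in>Gs k. x k = Zs k #> g)"
proof -
  have e: "\<And>k. k < n \<Longrightarrow> x k \<in> carrier (Fam k) \<longleftrightarrow> (\<exists>g\<in>Gs k. x k = Zs k #> g)"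
    using Fam_carrier by blast
  have "x \<in> carrier PR \<longleftrightarrow> (\<forall>k\<in>{..<n}. x k \<in> carrier (Fam k)) \<and> x \<in> extensional {..<n}"
    unfolding PR_def carrier_product_group PiE_iff by simp
  also have "\<dots> \<longleftrightarrow> x \<in> extensional {..<n} \<and> (\<forall>k<n. \<exists>g\<in>Gs k. x k = Zs k #> g)"
    using e by auto
  finally show ?thesis .
qed

lemma rep_prop: "x \<in> carrier PR \<Longrightarrow> k < n \<Longrightarrow> rep x k \<in> Gs k \<and> x k = Zs k #> rep x k"
proof -
  assume x: "x \<in> carrier PR" and k: "k < n"
  then obtain g where "g \<in> Gs k" "x k = Zs k #> g" using PR_carrier by blast
  then have "\<exists>g. g \<in> Gs k \<and> x k = Zs k #> g" by blast
  then show ?thesis unfolding rep_def by (rule someI_ex)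
qed

lemma qm_elist: "(\<And>k. k \<in> set l \<Longrightarrow> r k \<in> carrier G) \<Longrightarrow> qm (elist G (map r l)) = elist QQ (map (qm \<circ> r) l)"
  using PH.elist_hom[of "map r l"] by auto

lemma fval:
  assumes x: "x \<in> carrier PR" and r: "\<And>k. k < n \<Longrightarrow> r k \<in> Gs k \<and> x k = Zs k #> r k"
  shows "ff x = qm (elist G (map r [0..<n]))"
proof -
  have eq: "(qm \<circ> rep x) k = (qm \<circ> r) k" if k: "k \<in> set [0..<n]" for k
  proof -
    have k': "k < n" using k by simp
    have a: "rep x k \<in> Gs k" "x k = Zs k #> rep x k" using rep_prop[OF x k'] by auto
    have b: "r k \<in> Gs k" "x k = Zs k #> r k" using r[OF k'] by auto
    have c: "rep x k \<in> carrier G" "r k \<in> carrier G" using a b Gs_carr[OF k'] by auto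
    have "Zs k #> rep x k = Zs k #> r k" using a b by simp
    then have "rep x k \<otimes> inv (r k) \<in> Zs k" using rcos_eq[OF nrm_sg[OF nZs[OF k']] c] by simp
    then have "rep x k \<otimes> inv (r k) \<in> ZZ" using Zs_sub_Z[OF k'] by blast
    then show ?thesis using pi_eq_iff c by simp
  qed
  have c1: "rep x k \<in> carrier G" if "k \<in> set [0..<n]" for k
  proof -
    have k: "k < n" using that by simp
    then show ?thesis using rep_prop[OF x k] Gs_carr[OF k] by blast
  qed
  have c2: "r k \<in> carrier G" if "k \<in> set [0..<n]" for k
  proof -
    have k: "k < n" using that by simp
    then show ?thesis using r[OF k] Gs_carr[OF k] by blast
  qed
  have "ff x = elist QQ (map (qm \<circ> rep x) [0..<n])" unfolding ff_def using qm_elist c1 by blast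
  also have "\<dots> = elist QQ (map (qm \<circ> r) [0..<n])" by (rule arg_cong[OF map_cong[OF refl eq]])
  also have "\<dots> = qm (elist G (map r [0..<n]))" using qm_elist c2 by metis
  finally show ?thesis .
qed

lemma ff_hom: "ff \<in> hom PR QQ"
proof (rule homI)
  fix x assume x: "x \<in> carrier PR"
  have "set (map (rep x) [0..<n]) \<subseteq> carrier G"
  proof
    fix y assume "y \<in> set (map (rep x) [0..<n])"
    then obtain k where k: "k < n" "y = rep x k" by auto
    then show "y \<in> carrier G" using rep_prop[OF x k(1)] Gs_carr[OF k(1)] by blast
  qed
  then show "ff x \<in> carrier QQ" unfolding ff_def using pi_carr elist_closed by blast
next
  fix x y assume x: "x \<in> carrier PR" and y: "y \<in> carrier PR"
  define r where "r = rep x"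
  define s where "s = rep y"
  have rs: "\<And>k. k < n \<Longrightarrow> r k \<in> Gs k \<and> x k = Zs k #> r k" "\<And>k. k < n \<Longrightarrow> s k \<in> Gs k \<and> y k = Zs k #> s k"
    unfolding r_def s_def using rep_prop x y by auto
  have xy: "x \<otimes>\<^bsub>PR\<^esub> y \<in> carrier PR" by (rule monoid.m_closed[OF group.is_monoid[OF PR_group] x y])
  have xyk: "(x \<otimes>\<^bsub>PR\<^esub> y) k = Zs k #> (r k \<otimes> s k)" if k: "k < n" for k
  proof -
    have "(x \<otimes>\<^bsub>PR\<^esub> y) k = x k \<otimes>\<^bsub>Fam k\<^esub> y k" unfolding PR_def using k by simp
    also have "\<dots> = (Zs k #> r k) <#> (Zs k #> s k)" using Fam_mult[OF k] rs k by simp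
    also have "\<dots> = Zs k #> (r k \<otimes> s k)" using Zs_coset_mult[OF k] rs k by simp
    finally show ?thesis .
  qed
  have rsG: "r k \<otimes> s k \<in> Gs k" if "k < n" for k using subgroup.m_closed[OF sgs[OF that]] rs that by blast
  have cr: "\<And>k. k < n \<Longrightarrow> r k \<in> carrier G" and cs: "\<And>k. k < n \<Longrightarrow> s k \<in> carrier G" using rs Gs_carr by blast+
  have "ff (x \<otimes>\<^bsub>PR\<^esub> y) = qm (elist G (map (\<lambda>k. r k \<otimes> s k) [0..<n]))"
  proof (rule fval[OF xy])
    fix k assume k: "k < n"
    show "r k \<otimes> s k \<in> Gs k \<and> (x \<otimes>\<^bsub>PR\<^esub> y) k = Zs k #> (r k \<otimes> s k)" using xyk[OF k] rsG[OF k] by simp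
  qed
  also have "\<dots> = elist QQ (map (\<lambda>k. qm (r k \<otimes> s k)) [0..<n])"
    using qm_elist[of "[0..<n]" "\<lambda>k. r k \<otimes> s k"] cr cs by (simp add: comp_def)
  also have "\<dots> = elist QQ (map (\<lambda>k. qm (r k) \<otimes>\<^bsub>QQ\<^esub> qm (s k)) [0..<n])"
    by (rule arg_cong[OF map_cong[OF refl]]) (simp add: pi_mult cr cs)
  also have "\<dots> = elist QQ (map (\<lambda>k. qm (r k)) [0..<n]) \<otimes>\<^bsub>QQ\<^esub> elist QQ (map (\<lambda>k. qm (s k)) [0..<n])"
  proof (rule group.elist_mult_comm[OF Qgrp])
    show "distinct [0..<n]" by simp
    show "\<And>k. k \<in> set [0..<n] \<Longrightarrow> qm (r k) \<in> carrier QQ" using cr pi_carr by simp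
    show "\<And>k. k \<in> set [0..<n] \<Longrightarrow> qm (s k) \<in> carrier QQ" using cs pi_carr by simp
    fix j k assume "j \<in> set [0..<n]" "k \<in> set [0..<n]" "j \<noteq> k"
    then show "qm (s j) \<otimes>\<^bsub>QQ\<^esub> qm (r k) = qm (r k) \<otimes>\<^bsub>QQ\<^esub> qm (s j)"
      using pi_comm2 rs by simp
  qed
  also have "\<dots> = ff x \<otimes>\<^bsub>QQ\<^esub> ff y"
  proof -
    have "ff x = elist QQ (map (\<lambda>k. qm (r k)) [0..<n])"
      using fval[OF x rs(1)] qm_elist[of "[0..<n]" r] cr by (simp add: comp_def)
    moreover have "ff y = elist QQ (map (\<lambda>k. qm (s k)) [0..<n])"
      using fval[OF y rs(2)] qm_elist[of "[0..<n]" s] cs by (simp add: comp_def)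
    ultimately show ?thesis by simp
  qed
  finally show "ff (x \<otimes>\<^bsub>PR\<^esub> y) = ff x \<otimes>\<^bsub>QQ\<^esub> ff y" .
qed

lemma ff_group_hom: "group_hom PR QQ ff"
  unfolding group_hom_def group_hom_axioms_def using PR_group Qgrp ff_hom by simp

lemma ff_onto: "ff ` carrier PR = carrier QQ"
proof
  show "ff ` carrier PR \<subseteq> carrier QQ" using ff_hom unfolding hom_def by auto
  show "carrier QQ \<subseteq> ff ` carrier PR"
  proof
    fix c assume "c \<in> carrier QQ"
    then obtain g where g: "g \<in> carrier G" "c = ZZ #> g" unfolding carrier_FactGroup by blast
    have "g \<in> set_prod_list G (map Gs [0..<n])" using g prodG by simp
    then obtain r where r: "\<forall>k\<in>set [0..<n]. r k \<in> Gs k" "g = elist G (map r [0..<n])"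
      using prod_decomp[of "[0..<n]" Gs g] Gs_carr by auto
    define x where "x = (\<lambda>k\<in>{..<n}. Zs k #> r k)"
    have x: "x \<in> carrier PR" unfolding PR_carrier x_def using r by auto
    have "ff x = qm g" using fval[OF x, of r] r unfolding x_def by simp
    then show "c \<in> ff ` carrier PR" using x g unfolding qm_def by auto
  qed
qed

lemma ff_ker: "kernel PR QQ ff = {\<one>\<^bsub>PR\<^esub>}"
proof
  interpret FH: group_hom PR QQ ff by (rule ff_group_hom)
  show "{\<one>\<^bsub>PR\<^esub>} \<subseteq> kernel PR QQ ff" unfolding kernel_def by simp
  show "kernel PR QQ ff \<subseteq> {\<one>\<^bsub>PR\<^esub>}"
  proof
    fix x assume "x \<in> kernel PR QQ ff"
    then have x: "x \<in> carrier PR" and fx: "ff x = \<one>\<^bsub>QQ\<^esub>" unfolding kernel_def by auto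
    define r where "r = rep x"
    have rs: "\<And>k. k < n \<Longrightarrow> r k \<in> Gs k \<and> x k = Zs k #> r k" unfolding r_def using rep_prop x by auto
    have cr: "\<And>k. k < n \<Longrightarrow> r k \<in> carrier G" using rs Gs_carr by blast
    define T where "T = {t \<in> carrier G. \<forall>g\<in>carrier G. qm t \<otimes>\<^bsub>QQ\<^esub> qm g = qm g \<otimes>\<^bsub>QQ\<^esub> qm t}"
    have QM: "monoid QQ" using group.is_monoid[OF Qgrp] .
    have nT: "nrm G (carrier G) T" unfolding nrm_def
    proof (intro conjI ballI)
      show "subgroup T G"
      proof (rule subgroupI)
        show "T \<subseteq> carrier G" unfolding T_def by blast
        have q1: "qm \<one> = \<one>\<^bsub>QQ\<^esub>" using PH.hom_one .
        have "\<forall>g\<in>carrier G. qm \<one> \<otimes>\<^bsub>QQ\<^esub> qm g = qm g \<otimes>\<^bsub>QQ\<^esub> qm \<one>"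
        proof
          fix g assume g: "g \<in> carrier G"
          have "qm \<one> \<otimes>\<^bsub>QQ\<^esub> qm g = qm g" unfolding q1 by (rule monoid.l_one[OF QM pi_carr[OF g]])
          moreover have "qm g \<otimes>\<^bsub>QQ\<^esub> qm \<one> = qm g" unfolding q1 by (rule monoid.r_one[OF QM pi_carr[OF g]])
          ultimately show "qm \<one> \<otimes>\<^bsub>QQ\<^esub> qm g = qm g \<otimes>\<^bsub>QQ\<^esub> qm \<one>" by simp
        qed
        then have "\<one> \<in> T" unfolding T_def by simp
        then show "T \<noteq> {}" by blast
        fix a b assume a: "a \<in> T" and b: "b \<in> T"
        have ac: "a \<in> carrier G" "b \<in> carrier G" using a b unfolding T_def by auto
        show "inv a \<in> T" unfolding T_def
        proof (intro CollectI conjI ballI)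
          show "inv a \<in> carrier G" using ac by simp
          fix g assume g: "g \<in> carrier G"
          have cm: "qm a \<otimes>\<^bsub>QQ\<^esub> qm g = qm g \<otimes>\<^bsub>QQ\<^esub> qm a" using a g unfolding T_def by auto
          have "qm g \<otimes>\<^bsub>QQ\<^esub> inv\<^bsub>QQ\<^esub> qm a = inv\<^bsub>QQ\<^esub> qm a \<otimes>\<^bsub>QQ\<^esub> qm g"
            by (rule group.comm_inv[OF Qgrp pi_carr[OF g] pi_carr[OF ac(1)] cm[symmetric]])
          then show "qm (inv a) \<otimes>\<^bsub>QQ\<^esub> qm g = qm g \<otimes>\<^bsub>QQ\<^esub> qm (inv a)" unfolding pi_inv[OF ac(1)] by (rule sym)
        qed
        show "a \<otimes> b \<in> T" unfolding T_def
        proof (intro CollectI conjI ballI)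
          show "a \<otimes> b \<in> carrier G" using ac by simp
          fix g assume g: "g \<in> carrier G"
          have c1: "qm g \<otimes>\<^bsub>QQ\<^esub> qm a = qm a \<otimes>\<^bsub>QQ\<^esub> qm g" using a g unfolding T_def by auto
          have c2: "qm g \<otimes>\<^bsub>QQ\<^esub> qm b = qm b \<otimes>\<^bsub>QQ\<^esub> qm g" using b g unfolding T_def by auto
          have "qm g \<otimes>\<^bsub>QQ\<^esub> (qm a \<otimes>\<^bsub>QQ\<^esub> qm b) = (qm a \<otimes>\<^bsub>QQ\<^esub> qm b) \<otimes>\<^bsub>QQ\<^esub> qm g"
            by (rule group.comm_mult[OF Qgrp pi_carr[OF g] pi_carr[OF ac(1)] pi_carr[OF ac(2)] c1 c2])
          then show "qm (a \<otimes> b) \<otimes>\<^bsub>QQ\<^esub> qm g = qm g \<otimes>\<^bsub>QQ\<^esub> qm (a \<otimes> b)" unfolding pi_mult[OF ac] by (rule sym)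
        qed
      qed
      show "T \<subseteq> carrier G" unfolding T_def by blast
      fix h t assume h: "h \<in> carrier G" and t: "t \<in> T"
      have tc: "t \<in> carrier G" using t unfolding T_def by auto
      have cm: "qm h \<otimes>\<^bsub>QQ\<^esub> qm t = qm t \<otimes>\<^bsub>QQ\<^esub> qm h" using t h unfolding T_def by auto
      have "qm (h \<otimes> t \<otimes> inv h) = qm h \<otimes>\<^bsub>QQ\<^esub> qm t \<otimes>\<^bsub>QQ\<^esub> inv\<^bsub>QQ\<^esub> qm h" using pi_mult pi_inv h tc by simp
      also have "\<dots> = qm t" by (rule group.comm_conj[OF Qgrp pi_carr[OF h] pi_carr[OF tc] cm])
      finally show "h \<otimes> t \<otimes> inv h \<in> T" using t h tc unfolding T_def by auto
    qed
    have ZT: "ZZ \<subseteq> T"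
    proof
      fix z assume z: "z \<in> ZZ"
      have zc: "z \<in> carrier G" using nrm_carr[OF nZ z] .
      have q: "qm z = \<one>\<^bsub>QQ\<^esub>" using pi_Z[OF z] .
      have "\<forall>g\<in>carrier G. qm z \<otimes>\<^bsub>QQ\<^esub> qm g = qm g \<otimes>\<^bsub>QQ\<^esub> qm z"
      proof
        fix g assume g: "g \<in> carrier G"
        have "qm z \<otimes>\<^bsub>QQ\<^esub> qm g = qm g" unfolding q by (rule monoid.l_one[OF QM pi_carr[OF g]])
        moreover have "qm g \<otimes>\<^bsub>QQ\<^esub> qm z = qm g" unfolding q by (rule monoid.r_one[OF QM pi_carr[OF g]])
        ultimately show "qm z \<otimes>\<^bsub>QQ\<^esub> qm g = qm g \<otimes>\<^bsub>QQ\<^esub> qm z" by simp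
      qed
      then show "z \<in> T" unfolding T_def using zc by blast
    qed
    have TZ: "T \<subseteq> ZZ"
    proof (rule central_absorb[OF her cn fin subgroup_self hZ grZ nT ZT])
      fix t h assume t: "t \<in> T" and h: "h \<in> carrier G"
      have tc: "t \<in> carrier G" using t unfolding T_def by auto
      have cm: "qm t \<otimes>\<^bsub>QQ\<^esub> qm h = qm h \<otimes>\<^bsub>QQ\<^esub> qm t" using t h unfolding T_def by auto
      have "qm (t \<otimes> h \<otimes> inv t \<otimes> inv h) = qm t \<otimes>\<^bsub>QQ\<^esub> qm h \<otimes>\<^bsub>QQ\<^esub> inv\<^bsub>QQ\<^esub> qm t \<otimes>\<^bsub>QQ\<^esub> inv\<^bsub>QQ\<^esub> qm h"
        using pi_mult pi_inv h tc by simp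
      also have "\<dots> = \<one>\<^bsub>QQ\<^esub>" by (rule group.comm_comm[OF Qgrp pi_carr[OF tc] pi_carr[OF h] cm])
      finally show "t \<otimes> h \<otimes> inv t \<otimes> inv h \<in> ZZ" using in_Z_by_pi tc h by simp
    qed
    have xi: "x i = Zs i" if i: "i < n" for i
    proof -
      define a where "a = (\<lambda>k. qm (r k))"
      have ac: "\<And>k. k \<in> set [0..<n] \<Longrightarrow> a k \<in> carrier QQ" unfolding a_def using cr pi_carr by simp
      have fx': "elist QQ (map a [0..<n]) = \<one>\<^bsub>QQ\<^esub>"
        using fx fval[OF x rs] qm_elist[of "[0..<n]" r] cr unfolding a_def by (simp add: comp_def)
      have ex: "elist QQ (map a [0..<n]) = a i \<otimes>\<^bsub>QQ\<^esub> elist QQ (map a (filter (\<lambda>j. j \<noteq> i) [0..<n]))"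
      proof (rule group.elist_extract[OF Qgrp])
        show "\<And>k. k \<in> set [0..<n] \<Longrightarrow> a k \<in> carrier QQ" by (rule ac)
        show "\<And>j. j \<in> set [0..<n] \<Longrightarrow> j \<noteq> i \<Longrightarrow> a i \<otimes>\<^bsub>QQ\<^esub> a j = a j \<otimes>\<^bsub>QQ\<^esub> a i"
          unfolding a_def using pi_comm2 rs i by simp
      qed (use i in auto)
      define w where "w = elist G (map r (filter (\<lambda>j. j \<noteq> i) [0..<n]))"
      have wP: "w \<in> PP i" unfolding w_def PP_def using elist_in_prod[of "filter (\<lambda>j. j \<noteq> i) [0..<n]" r Gs] rs by auto
      have "set (map r (filter (\<lambda>j. j \<noteq> i) [0..<n])) \<subseteq> carrier G" using cr by auto
      then have wc: "w \<in> carrier G" unfolding w_def by (rule elist_closed)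
      have qw: "qm w = elist QQ (map a (filter (\<lambda>j. j \<noteq> i) [0..<n]))"
        unfolding w_def a_def using qm_elist[of "filter (\<lambda>j. j \<noteq> i) [0..<n]" r] cr by (simp add: comp_def)
      have e1: "a i \<otimes>\<^bsub>QQ\<^esub> qm w = \<one>\<^bsub>QQ\<^esub>" using fx' ex qw by simp
      have ai: "a i = inv\<^bsub>QQ\<^esub> qm w" using group.inv_equality[OF Qgrp e1 pi_carr[OF wc]] ac i by simp
      have aic: "a i \<in> carrier QQ" using ac i by simp
      have "carrier G \<subseteq> {g \<in> carrier G. a i \<otimes>\<^bsub>QQ\<^esub> qm g = qm g \<otimes>\<^bsub>QQ\<^esub> a i}"
      proof (rule prod_all)
        have q1: "qm \<one> = \<one>\<^bsub>QQ\<^esub>" using PH.hom_one .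
        have "a i \<otimes>\<^bsub>QQ\<^esub> qm \<one> = a i" unfolding q1 by (rule monoid.r_one[OF QM aic])
        moreover have "qm \<one> \<otimes>\<^bsub>QQ\<^esub> a i = a i" unfolding q1 by (rule monoid.l_one[OF QM aic])
        ultimately show "\<one> \<in> {g \<in> carrier G. a i \<otimes>\<^bsub>QQ\<^esub> qm g = qm g \<otimes>\<^bsub>QQ\<^esub> a i}" by simp
        fix g h assume g: "g \<in> {g \<in> carrier G. a i \<otimes>\<^bsub>QQ\<^esub> qm g = qm g \<otimes>\<^bsub>QQ\<^esub> a i}"
          and h: "h \<in> {g \<in> carrier G. a i \<otimes>\<^bsub>QQ\<^esub> qm g = qm g \<otimes>\<^bsub>QQ\<^esub> a i}"
        have gc: "g \<in> carrier G" "h \<in> carrier G" using g h by auto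
        have "a i \<otimes>\<^bsub>QQ\<^esub> (qm g \<otimes>\<^bsub>QQ\<^esub> qm h) = (qm g \<otimes>\<^bsub>QQ\<^esub> qm h) \<otimes>\<^bsub>QQ\<^esub> a i"
          using group.comm_mult[OF Qgrp aic pi_carr[OF gc(1)] pi_carr[OF gc(2)]] g h by auto
        then show "g \<otimes> h \<in> {g \<in> carrier G. a i \<otimes>\<^bsub>QQ\<^esub> qm g = qm g \<otimes>\<^bsub>QQ\<^esub> a i}" using pi_mult gc by simp
      next
        fix j assume j: "j < n"
        show "Gs j \<subseteq> {g \<in> carrier G. a i \<otimes>\<^bsub>QQ\<^esub> qm g = qm g \<otimes>\<^bsub>QQ\<^esub> a i}"
        proof
          fix g assume g: "g \<in> Gs j"
          have gc: "g \<in> carrier G" using g Gs_carr[OF j] by auto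
          have "a i \<otimes>\<^bsub>QQ\<^esub> qm g = qm g \<otimes>\<^bsub>QQ\<^esub> a i"
          proof (cases "j = i")
            case True
            have "g \<otimes> w \<otimes> inv g \<otimes> inv w \<in> ZZ" using commZ[OF i] g wP True by simp
            then have cm: "qm g \<otimes>\<^bsub>QQ\<^esub> qm w = qm w \<otimes>\<^bsub>QQ\<^esub> qm g" using pi_comm gc wc by simp
            have "qm g \<otimes>\<^bsub>QQ\<^esub> inv\<^bsub>QQ\<^esub> qm w = inv\<^bsub>QQ\<^esub> qm w \<otimes>\<^bsub>QQ\<^esub> qm g"
              by (rule group.comm_inv[OF Qgrp pi_carr[OF gc] pi_carr[OF wc] cm])
            then show ?thesis using ai by simp
          next
            case False
            then show ?thesis unfolding a_def using pi_comm2[OF i j _ _ g] rs[OF i] by auto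
          qed
          then show "g \<in> {g \<in> carrier G. a i \<otimes>\<^bsub>QQ\<^esub> qm g = qm g \<otimes>\<^bsub>QQ\<^esub> a i}" using gc by simp
        qed
      qed
      then have "r i \<in> T" unfolding T_def a_def using cr[OF i] by auto
      then have "r i \<in> Gs i \<inter> ZZ" using TZ rs[OF i] by blast
      then have riZ: "r i \<in> Zs i" using Gs_Z_sub[OF i] by blast
      have "Zs i #> r i = Zs i #> \<one>" using rcos_eq[OF nrm_sg[OF nZs[OF i]] cr[OF i] one_closed] riZ cr[OF i] by simp
      then show ?thesis using rs[OF i] rcos_one[OF nrm_sg[OF nZs[OF i]]] by simp
    qed
    have "x = \<one>\<^bsub>PR\<^esub>"
    proof
      fix i
      show "x i = \<one>\<^bsub>PR\<^esub> i"
      proof (cases "i < n")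
        case True
        then show ?thesis unfolding PR_def using xi Fam_one by simp
      next
        case False
        have "x \<in> extensional {..<n}" using x PR_carrier by blast
        then show ?thesis unfolding PR_def using False by (simp add: extensional_def)
      qed
    qed
    then show "x \<in> {\<one>\<^bsub>PR\<^esub>}" by simp
  qed
qed

lemma main_iso: "G Mod (F_hypercenter F G) \<cong> product_group {..<n} Fam"
proof -
  interpret FH: group_hom PR QQ ff by (rule ff_group_hom)
  have inj: "inj_on ff (carrier PR)" using FH.inj_iff_trivial_ker ff_ker by simp
  have "ff \<in> iso PR QQ" unfolding iso_iff using ff_hom ff_onto inj by simp
  then have "PR \<cong> QQ" unfolding is_iso_def by blast
  then have "QQ \<cong> PR" using group.iso_sym[OF PR_group] by blast
  then show ?thesis unfolding PR_def ZZ_eq .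
qed

end

theorem lemma2:
  fixes F :: "nat monoid \<Rightarrow> bool"
    and G :: "('a, 'b) monoid_scheme"
    and Gs :: "nat \<Rightarrow> 'a set"
    and n :: nat
  assumes "hereditary_formation F"
    and "contains_nilpotent F"
    and "group G" and "finite (carrier G)"
    and "\<forall>i<n. subgroup (Gs i) G"
    and "carrier G = set_prod_list G (map Gs [0..<n])"
    and "\<forall>i<n. \<forall>j<n. subgroup (Gs i <#>\<^bsub>G\<^esub> Gs j) G"
    and "\<forall>i<n. comm_subgroup G (Gs i) (set_prod_list G (map Gs (filter (\<lambda>j. j \<noteq> i) [0..<n])))
                 \<subseteq> F_hypercenter F G"
  shows "G Mod (F_hypercenter F G) \<cong>
           product_group {..<n}
             (\<lambda>i. (G\<lparr>carrier := Gs i\<rparr>) Mod (F_hypercenter F (G\<lparr>carrier := Gs i\<rparr>)))"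
  proof -
  have "setting G F Gs n" unfolding setting_def setting_axioms_def using assms by blast
  then interpret S: setting G F Gs n .
  have e: "S.Fam = (\<lambda>i. (G\<lparr>carrier := Gs i\<rparr>) Mod (F_hypercenter F (G\<lparr>carrier := Gs i\<rparr>)))"
    by (rule ext) (simp add: S.Fam_def)
  show ?thesis using S.main_iso unfolding e .
qed

end
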